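(* Let $G$ be the $p\times p$ two-dimensional lattice (grid graph) with $n=p^2$ vertices, and let $\rho=c\,n^{-1/2}$ for a constant $c>0$. Then, as $n\to\infty$, $H_0:\beta\in\Theta_0$ and $H_1:\beta\in\Theta_1$ are asymptotically distinguished by the spectral scan statistic $\hat s$ provided $$\frac{\eta}{\sigma}=\omega(n^{3/8}).$$
   Context: The $p\times p$ lattice has vertex set $[p]\times[p]$, with unit-weight edges between vertices at $\ell_1$-distance 1. $L$ is its combinatorial Laplacian ($L=D-W$). We observe $y=\beta+\varepsilon$, $\varepsilon\sim N(0,\sigma^2I_n)$, $\sigma>0$ known; $P_\beta$ is the law of $y$. $\mathbf 1$ is the all-ones vector, $\mathbf 1_C$ the indicator of $C$, $\bar C=V\setminus C$, $|\partial C|$ the number of edges between $C$ and $\bar C$. $\mathcal{C}(\rho)=\{C\subset V:C\ne\emptyset,C\ne V,|\partial C|/(|C||\bar C|)\le\rho/n\}$. $\bar\beta=\frac1n\mathbf 1^\top\beta$; $\Theta_0=\{\mu\mathbf 1:\mu\in\mathbb{R}\}$, and for $\eta>0$, $\Theta_1=\{\mu\mathbf 1+\delta\mathbf 1_C:\mu\in\mathbb{R},\delta\ne0,C\in\mathcal{C}(\rho),\|\beta-\bar\beta\mathbf 1\|\ge\eta\}$. $\tilde y=y-\bar y\mathbf 1$. Spectral scan statistic: $\hat s=\sup\{(x^\top\tilde y)^2:x\in\mathbb{R}^n,x^\top Lx\le\rho,\|x\|\le1,x^\top\mathbf 1=0\}$. $\sigma,\eta$ may depend on $n$; $a_n=\omega(b_n)$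 means $b_n/a_n\to0$. Asymptotically distinguished by $\hat s$: there exist thresholds $\tau_n$ such that $T=\mathbf 1\{\hat s>\tau_n\}$ satisfies $\sup_{\beta\in\Theta_0}P_\beta(T=1)\to0$ and $\sup_{\beta\in\Theta_1}P_\beta(T=0)\to0$. *)

theory Defs
  imports "HOL-Probability.Probability"
begin

type_synonym vtx = "nat \<times> nat"

definition grid_V :: "nat \<Rightarrow> vtx set" where
  "grid_V p = {..<p} \<times> {..<p}"

definition grid_adj :: "vtx \<Rightarrow> vtx \<Rightarrow> bool" where
  "grid_adj u v \<longleftrightarrow> \<bar>int (fst u) - int (fst v)\<bar> + \<bar>int (snd u) - int (snd v)\<bar> = 1"

definition grid_W :: "nat \<Rightarrow> vtx \<Rightarrow> vtx \<Rightarrow> real" where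
  "grid_W p u v = (if u \<in> grid_V p \<and> v \<in> grid_V p \<and> grid_adj u v then 1 else 0)"

definition grid_D :: "nat \<Rightarrow> vtx \<Rightarrow> vtx \<Rightarrow> real" where
  "grid_D p u v = (if u = v then (\<Sum>w\<in>grid_V p. grid_W p u w) else 0)"

definition grid_L :: "nat \<Rightarrow> vtx \<Rightarrow> vtx \<Rightarrow> real" where
  "grid_L p u v = grid_D p u v - grid_W p u v"

definition quadL :: "nat \<Rightarrow> (vtx \<Rightarrow> real) \<Rightarrow> real" where
  "quadL p x = (\<Sum>u\<in>grid_V p. \<Sum>v\<in>grid_V p. x u * grid_L p u v * x v)"

definition vinner :: "nat \<Rightarrow> (vtx \<Rightarrow> real) \<Rightarrow> (vtx \<Rightarrow> real) \<Rightarrow> real" where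
  "vinner p x y = (\<Sum>v\<in>grid_V p. x v * y v)"

definition vnorm :: "nat \<Rightarrow> (vtx \<Rightarrow> real) \<Rightarrow> real" where
  "vnorm p x = sqrt (vinner p x x)"

definition vmean :: "nat \<Rightarrow> (vtx \<Rightarrow> real) \<Rightarrow> real" where
  "vmean p x = (\<Sum>v\<in>grid_V p. x v) / real (card (grid_V p))"

definition centre :: "nat \<Rightarrow> (vtx \<Rightarrow> real) \<Rightarrow> vtx \<Rightarrow> real" where
  "centre p x = (\<lambda>v. x v - vmean p x)"

definition cut_size :: "nat \<Rightarrow> vtx set \<Rightarrow> nat" where
  "cut_size p C = card {(u, v). u \<in> C \<and> v \<in> grid_V p - C \<and> grid_adj u v}"

definition cut_class :: "nat \<Rightarrow> real \<Rightarrow> vtx set set" where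
  "cut_class p \<rho> = {C. C \<subseteq> grid_V p \<and> C \<noteq> {} \<and> C \<noteq> grid_V p \<and>
      real (cut_size p C) / (real (card C) * real (card (grid_V p - C)))
        \<le> \<rho> / real (card (grid_V p))}"

definition Theta0 :: "nat \<Rightarrow> (vtx \<Rightarrow> real) set" where
  "Theta0 p = {\<beta>. \<exists>\<mu>::real. \<forall>v\<in>grid_V p. \<beta> v = \<mu>}"

definition Theta1 :: "nat \<Rightarrow> real \<Rightarrow> real \<Rightarrow> (vtx \<Rightarrow> real) set" where
  "Theta1 p \<rho> \<eta> = {\<beta>. \<exists>(\<mu>::real) (\<delta>::real) C. \<delta> \<noteq> 0 \<and> C \<in> cut_class p \<rho> \<and>
      (\<forall>v\<in>grid_V p. \<beta> v = \<mu> + \<delta> * indicator C v) \<and>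
      vnorm p (centre p \<beta>) \<ge> \<eta>}"

definition spectral_scan :: "nat \<Rightarrow> real \<Rightarrow> (vtx \<Rightarrow> real) \<Rightarrow> real" where
  "spectral_scan p \<rho> y = Sup {(vinner p x (centre p y))\<^sup>2 | x.
      quadL p x \<le> \<rho> \<and> vnorm p x \<le> 1 \<and> (\<Sum>v\<in>grid_V p. x v) = 0}"

text \<open>Law of y = beta + eps, eps ~ N(0, sigma^2 I_n): product of independent normals.\<close>
definition law_y :: "nat \<Rightarrow> real \<Rightarrow> (vtx \<Rightarrow> real) \<Rightarrow> (vtx \<Rightarrow> real) measure" where
  "law_y p \<sigma> \<beta> = PiM (grid_V p) (\<lambda>v. density lborel (normal_density (\<beta> v) \<sigma>))"

end

theory Submission imports Defs begin

lemma finite_grid_V[simp]: "finite (grid_V p)"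
  by (simp add: grid_V_def)

lemma card_grid_V: "card (grid_V p) = p^2"
  by (simp add: grid_V_def card_cartesian_product power2_eq_square)

lemma grid_adj_sym: "grid_adj u v = grid_adj v u"
  unfolding grid_adj_def by (simp add: abs_minus_commute)

lemma grid_W_sym: "grid_W p u v = grid_W p v u"
  unfolding grid_W_def using grid_adj_sym by auto

lemma grid_W_nonneg: "grid_W p u v \<ge> 0"
  unfolding grid_W_def by auto

lemma quadL_alt:
  "quadL p x = (\<Sum>u\<in>grid_V p. \<Sum>v\<in>grid_V p. grid_W p u v * (x u - x v)^2) / 2"
proof -
  let ?V = "grid_V p"
  define deg where "deg u = (\<Sum>w\<in>?V. grid_W p u w)" for u
  have D: "(\<Sum>v\<in>?V. x u * grid_D p u v * x v) = (if u \<in> ?V then x u ^ 2 * deg u else 0)" for u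
  proof -
    have "x u * grid_D p u v * x v = (if v = u then x u ^ 2 * deg u else 0)" for v
      unfolding grid_D_def deg_def by (auto simp: power2_eq_square)
    then show ?thesis by simp
  qed
  have q: "quadL p x = (\<Sum>u\<in>?V. x u ^ 2 * deg u) - (\<Sum>u\<in>?V. \<Sum>v\<in>?V. grid_W p u v * x u * x v)"
  proof -
    have "quadL p x = (\<Sum>u\<in>?V. \<Sum>v\<in>?V. x u * grid_D p u v * x v - grid_W p u v * x u * x v)"
      unfolding quadL_def grid_L_def by (simp add: algebra_simps)
    also have "\<dots> = (\<Sum>u\<in>?V. (\<Sum>v\<in>?V. x u * grid_D p u v * x v) - (\<Sum>v\<in>?V. grid_W p u v * x u * x v))"
      by (simp add: sum_subtractf)
    also have "\<dots> = (\<Sum>u\<in>?V. x u ^ 2 * deg u - (\<Sum>v\<in>?V. grid_W p u v * x u * x v))"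
      by (rule sum.cong) (auto simp: D)
    finally show ?thesis by (simp add: sum_subtractf)
  qed
  have e1: "(\<Sum>u\<in>?V. \<Sum>v\<in>?V. grid_W p u v * x u ^ 2) = (\<Sum>u\<in>?V. x u ^ 2 * deg u)"
    unfolding deg_def by (simp add: sum_distrib_right mult.commute)
  have e2: "(\<Sum>u\<in>?V. \<Sum>v\<in>?V. grid_W p u v * x v ^ 2) = (\<Sum>u\<in>?V. x u ^ 2 * deg u)"
    apply (subst sum.swap) unfolding deg_def
    by (simp add: sum_distrib_right mult.commute grid_W_sym)
  have "(\<Sum>u\<in>?V. \<Sum>v\<in>?V. grid_W p u v * (x u - x v)^2)
     = (\<Sum>u\<in>?V. \<Sum>v\<in>?V. grid_W p u v * x u ^ 2) + (\<Sum>u\<in>?V. \<Sum>v\<in>?V. grid_W p u v * x v ^ 2)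
       - 2 * (\<Sum>u\<in>?V. \<Sum>v\<in>?V. grid_W p u v * x u * x v)"
    by (simp add: power2_diff algebra_simps sum.distrib sum_subtractf sum_distrib_left)
  then show ?thesis using q e1 e2 by simp
qed


definition dv :: "nat \<Rightarrow> (vtx \<Rightarrow> real) \<Rightarrow> vtx \<Rightarrow> real" where
  "dv p x u = (if (Suc (fst u), snd u) \<in> grid_V p then (x (Suc (fst u), snd u) - x u)^2 else 0)"
definition dh :: "nat \<Rightarrow> (vtx \<Rightarrow> real) \<Rightarrow> vtx \<Rightarrow> real" where
  "dh p x u = (if (fst u, Suc (snd u)) \<in> grid_V p then (x (fst u, Suc (snd u)) - x u)^2 else 0)"

lemma dv_nonneg: "dv p x u \<ge> 0" and dh_nonneg: "dh p x u \<ge> 0"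
  unfolding dv_def dh_def by auto

lemma dvdh_le:
  assumes u: "u \<in> grid_V p"
  shows "dv p x u + dh p x u \<le> (\<Sum>v\<in>grid_V p. grid_W p u v * (x u - x v)^2)"
proof -
  obtain i j where uij: "u = (i, j)" by (cases u)
  define a where "a = (Suc i, j)"
  define b where "b = (i, Suc j)"
  have ab: "a \<noteq> b" unfolding a_def b_def by auto
  define g where "g v = (if v = a then (x u - x v)^2 else 0) + (if v = b then (x u - x v)^2 else 0)" for v
  have "g v \<le> grid_W p u v * (x u - x v)^2" if "v \<in> grid_V p" for v
  proof -
    have "grid_adj u a" "grid_adj u b" unfolding grid_adj_def a_def b_def uij by auto
    then show ?thesis using that u ab unfolding g_def grid_W_def by auto
  qed
  then have "(\<Sum>v\<in>grid_V p. g v) \<le> (\<Sum>v\<in>grid_V p. grid_W p u v * (x u - x v)^2)"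
    by (rule sum_mono)
  moreover have "(\<Sum>v\<in>grid_V p. g v) = dv p x u + dh p x u"
    unfolding g_def sum.distrib dv_def dh_def uij a_def b_def
    by (simp add: sum.delta power2_commute)
  ultimately show ?thesis by simp
qed

lemma sum_dvdh_le: "(\<Sum>u\<in>grid_V p. dv p x u + dh p x u) \<le> 2 * quadL p x"
  unfolding quadL_alt using dvdh_le by (simp add: sum_mono)


lemma path1:
  fixes f :: "nat \<Rightarrow> real"
  assumes "i1 \<le> i2"
  shows "(f i2 - f i1)^2 \<le> real (i2 - i1) * (\<Sum>i\<in>{i1..<i2}. (f (Suc i) - f i)^2)"
proof -
  have "f i2 - f i1 = (\<Sum>i\<in>{i1..<i2}. 1 * (f (Suc i) - f i))"
    using sum_Suc_diff'[OF assms, of f] by simp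
  also have "(\<dots>)^2 \<le> (\<Sum>i\<in>{i1..<i2}. 1^2) * (\<Sum>i\<in>{i1..<i2}. (f (Suc i) - f i)^2)"
    by (rule Cauchy_Schwarz_ineq_sum)
  finally show ?thesis by simp
qed

lemma count_sum:
  fixes h :: "'a \<Rightarrow> real" and g :: "'a \<Rightarrow> 'b"
  assumes fin: "finite B" and cnt: "\<And>u'. u' \<in> B \<Longrightarrow> card {u\<in>B. g u = g u'} \<le> b"
    and nn: "\<And>u. h u \<ge> 0"
  shows "(\<Sum>u\<in>B. \<Sum>u'\<in>{u'\<in>B. g u' = g u}. h u') \<le> real b * (\<Sum>u'\<in>B. h u')"
proof -
  have "(\<Sum>u\<in>B. \<Sum>u'\<in>{u'\<in>B. g u' = g u}. h u') = (\<Sum>u\<in>B. \<Sum>u'\<in>B. if g u' = g u then h u' else 0)"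
    using fin by (simp add: sum.inter_filter)
  also have "\<dots> = (\<Sum>u'\<in>B. \<Sum>u\<in>B. if g u = g u' then h u' else 0)"
    by (subst sum.swap) (simp add: eq_commute)
  also have "\<dots> = (\<Sum>u'\<in>B. h u' * real (card {u\<in>B. g u = g u'}))"
    using fin by (simp add: sum.inter_filter[symmetric] mult.commute)
  also have "\<dots> \<le> (\<Sum>u'\<in>B. h u' * real b)"
    by (rule sum_mono) (use cnt nn in \<open>auto intro: mult_left_mono\<close>)
  finally show ?thesis by (simp add: sum_distrib_left mult.commute)
qed

definition bid :: "nat \<Rightarrow> vtx \<Rightarrow> nat \<times> nat" where
  "bid b v = (fst v div b, snd v div b)"

definition Blk :: "nat \<Rightarrow> nat \<Rightarrow> nat \<times> nat \<Rightarrow> vtx set" where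
  "Blk p b k = {w\<in>grid_V p. bid b w = k}"

lemma finite_Blk[simp]: "finite (Blk p b k)"
  unfolding Blk_def by simp

lemma div_block_sub: "b > 0 \<Longrightarrow> {i::nat. i div b = m} \<subseteq> {m*b..<m*b+b}"
proof
  fix i assume b: "b > 0" and "i \<in> {i::nat. i div b = m}"
  then have "i = m*b + i mod b" by (metis mem_Collect_eq div_mult_mod_eq)
  moreover have "i mod b < b" using b by simp
  ultimately show "i \<in> {m*b..<m*b+b}" by auto
qed

lemma div_block_finite: "b > 0 \<Longrightarrow> finite {i::nat. i div b = m}"
  using div_block_sub finite_subset by blast

lemma div_block_card: "b > 0 \<Longrightarrow> card {i::nat. i div b = m} \<le> b"
proof -
  assume b: "b > 0"
  have "card {i::nat. i div b = m} \<le> card {m*b..<m*b+b}"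
    by (rule card_mono[OF _ div_block_sub[OF b]]) simp
  then show ?thesis by simp
qed

lemma Blk_col_card:
  assumes "b > 0"
  shows "card {u\<in>Blk p b k. snd u = j} \<le> b"
proof -
  have "{u\<in>Blk p b k. snd u = j} \<subseteq> (\<lambda>i. (i, j)) ` {i. i div b = fst k}"
    unfolding Blk_def bid_def by force
  then have "card {u\<in>Blk p b k. snd u = j} \<le> card ((\<lambda>i. (i, j)) ` {i. i div b = fst k})"
    by (intro card_mono) (auto intro: finite_imageI div_block_finite assms)
  also have "\<dots> \<le> card {i. i div b = fst k}" by (rule card_image_le) (rule div_block_finite[OF assms])
  finally show ?thesis using div_block_card[OF assms, of "fst k"] by simp
qed

lemma Blk_row_card:
  assumes "b > 0"
  shows "card {u\<in>Blk p b k. fst u = i} \<le> b"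
proof -
  have "{u\<in>Blk p b k. fst u = i} \<subseteq> (\<lambda>j. (i, j)) ` {j. j div b = snd k}"
    unfolding Blk_def bid_def by force
  then have "card {u\<in>Blk p b k. fst u = i} \<le> card ((\<lambda>j. (i, j)) ` {j. j div b = snd k})"
    by (intro card_mono) (auto intro: finite_imageI div_block_finite assms)
  also have "\<dots> \<le> card {j. j div b = snd k}" by (rule card_image_le) (rule div_block_finite[OF assms])
  finally show ?thesis using div_block_card[OF assms, of "snd k"] by simp
qed


lemma same_div_le: "b > 0 \<Longrightarrow> (i1::nat) \<le> i2 \<Longrightarrow> i1 div b = i2 div b \<Longrightarrow> i2 - i1 \<le> b"
proof -
  assume b: "b > 0" and le: "i1 \<le> i2" and eq: "i1 div b = i2 div b"
  have "i2 = i2 div b * b + i2 mod b" by simp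
  moreover have "i1 = i1 div b * b + i1 mod b" by simp
  moreover have "i2 mod b < b" using b by simp
  moreover have "i1 div b * b = i2 div b * b" using eq by simp
  ultimately show ?thesis using le by linarith
qed

lemma col_bound_aux:
  assumes b: "b > 0" and le: "i1 \<le> i2"
    and m1: "(i1, j) \<in> Blk p b k" and m2: "(i2, j) \<in> Blk p b k"
  shows "(x (i2, j) - x (i1, j))^2 \<le> real b * (\<Sum>u'\<in>{u'\<in>Blk p b k. snd u' = j}. dv p x u')"
proof -
  let ?S = "\<Sum>i\<in>{i1..<i2}. (x (Suc i, j) - x (i, j))^2"
  have 1: "(x (i2, j) - x (i1, j))^2 \<le> real (i2 - i1) * ?S"
    using path1[OF le, of "\<lambda>i. x (i, j)"] by simp
  have d1: "i1 div b = fst k" "i2 div b = fst k" using m1 m2 by (auto simp: Blk_def bid_def)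
  have p2: "i2 < p" "j < p" using m2 by (auto simp: Blk_def grid_V_def)
  have 2: "i2 - i1 \<le> b" using same_div_le[OF b le] d1 by simp
  have S: "?S = (\<Sum>i\<in>{i1..<i2}. dv p x (i, j))"
    by (rule sum.cong) (use p2 in \<open>auto simp: dv_def grid_V_def\<close>)
  also have "\<dots> = (\<Sum>u\<in>(\<lambda>i. (i, j)) ` {i1..<i2}. dv p x u)"
    by (subst sum.reindex) (auto simp: inj_on_def)
  also have "\<dots> \<le> (\<Sum>u'\<in>{u'\<in>Blk p b k. snd u' = j}. dv p x u')"
  proof (rule sum_mono2)
    show "(\<lambda>i. (i, j)) ` {i1..<i2} \<subseteq> {u' \<in> Blk p b k. snd u' = j}"
    proof -
      have "(i, j) \<in> Blk p b k" if i: "i \<in> {i1..<i2}" for i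
      proof -
      from i have "i1 div b \<le> i div b" "i div b \<le> i2 div b" by (auto intro: div_le_mono)
      then have "i div b = fst k" using d1 by simp
      moreover have "j div b = snd k" using m2 by (auto simp: Blk_def bid_def)
      ultimately show "(i, j) \<in> Blk p b k" using i p2 by (auto simp: Blk_def bid_def grid_V_def)
      qed
      then show ?thesis by auto
    qed
  qed (auto simp: dv_nonneg)
  finally have 3: "?S \<le> (\<Sum>u'\<in>{u'\<in>Blk p b k. snd u' = j}. dv p x u')" .
  have S0: "?S \<ge> 0" by (simp add: sum_nonneg)
  have "real (i2 - i1) * ?S \<le> real b * ?S" using 2 S0 by (intro mult_right_mono) auto
  also have "\<dots> \<le> real b * (\<Sum>u'\<in>{u'\<in>Blk p b k. snd u' = j}. dv p x u')"
    using 3 by (intro mult_left_mono) auto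
  finally show ?thesis using 1 by simp
qed

lemma col_bound:
  assumes b: "b > 0" and m1: "(i1, j) \<in> Blk p b k" and m2: "(i2, j) \<in> Blk p b k"
  shows "(x (i1, j) - x (i2, j))^2 \<le> real b * (\<Sum>u'\<in>{u'\<in>Blk p b k. snd u' = j}. dv p x u')"
proof (cases "i1 \<le> i2")
  case True then show ?thesis using col_bound_aux[OF b True m1 m2] by (simp add: power2_commute)
next
  case False then show ?thesis using col_bound_aux[OF b _ m2 m1] by simp
qed

lemma row_bound_aux:
  assumes b: "b > 0" and le: "j1 \<le> j2"
    and m1: "(i, j1) \<in> Blk p b k" and m2: "(i, j2) \<in> Blk p b k"
  shows "(x (i, j2) - x (i, j1))^2 \<le> real b * (\<Sum>u'\<in>{u'\<in>Blk p b k. fst u' = i}. dh p x u')"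
proof -
  let ?S = "\<Sum>j\<in>{j1..<j2}. (x (i, Suc j) - x (i, j))^2"
  have 1: "(x (i, j2) - x (i, j1))^2 \<le> real (j2 - j1) * ?S"
    using path1[OF le, of "\<lambda>j. x (i, j)"] by simp
  have d1: "j1 div b = snd k" "j2 div b = snd k" using m1 m2 by (auto simp: Blk_def bid_def)
  have p2: "j2 < p" "i < p" using m2 by (auto simp: Blk_def grid_V_def)
  have 2: "j2 - j1 \<le> b" using same_div_le[OF b le] d1 by simp
  have S: "?S = (\<Sum>j\<in>{j1..<j2}. dh p x (i, j))"
    by (rule sum.cong) (use p2 in \<open>auto simp: dh_def grid_V_def\<close>)
  also have "\<dots> = (\<Sum>u\<in>(\<lambda>j. (i, j)) ` {j1..<j2}. dh p x u)"
    by (subst sum.reindex) (auto simp: inj_on_def)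
  also have "\<dots> \<le> (\<Sum>u'\<in>{u'\<in>Blk p b k. fst u' = i}. dh p x u')"
  proof (rule sum_mono2)
    show "(\<lambda>j. (i, j)) ` {j1..<j2} \<subseteq> {u' \<in> Blk p b k. fst u' = i}"
    proof -
      have "(i, j) \<in> Blk p b k" if j: "j \<in> {j1..<j2}" for j
      proof -
      from j have "j1 div b \<le> j div b" "j div b \<le> j2 div b" by (auto intro: div_le_mono)
      then have "j div b = snd k" using d1 by simp
      moreover have "i div b = fst k" using m2 by (auto simp: Blk_def bid_def)
      ultimately show "(i, j) \<in> Blk p b k" using j p2 by (auto simp: Blk_def bid_def grid_V_def)
      qed
      then show ?thesis by auto
    qed
  qed (auto simp: dh_nonneg)
  finally have 3: "?S \<le> (\<Sum>u'\<in>{u'\<in>Blk p b k. fst u' = i}. dh p x u')" .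
  have S0: "?S \<ge> 0" by (simp add: sum_nonneg)
  have "real (j2 - j1) * ?S \<le> real b * ?S" using 2 S0 by (intro mult_right_mono) auto
  also have "\<dots> \<le> real b * (\<Sum>u'\<in>{u'\<in>Blk p b k. fst u' = i}. dh p x u')"
    using 3 by (intro mult_left_mono) auto
  finally show ?thesis using 1 by simp
qed

lemma row_bound:
  assumes b: "b > 0" and m1: "(i, j1) \<in> Blk p b k" and m2: "(i, j2) \<in> Blk p b k"
  shows "(x (i, j1) - x (i, j2))^2 \<le> real b * (\<Sum>u'\<in>{u'\<in>Blk p b k. fst u' = i}. dh p x u')"
proof (cases "j1 \<le> j2")
  case True then show ?thesis using row_bound_aux[OF b True m1 m2] by (simp add: power2_commute)
next
  case False then show ?thesis using row_bound_aux[OF b _ m2 m1] by simp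
qed


lemma sq_tri: "((a::real) - c)^2 \<le> 2 * (a - w)^2 + 2 * (w - c)^2"
proof -
  have "2 * (a - w)^2 + 2 * (w - c)^2 - (a - c)^2 = (a - 2 * w + c)^2"
    by (simp add: power2_eq_square algebra_simps)
  then show ?thesis by (metis diff_ge_0_iff_ge zero_le_power2)
qed

lemma avg_double:
  fixes f g :: "'a \<Rightarrow> real"
  assumes "finite B" "card B > 0"
  shows "(\<Sum>u\<in>B. (\<Sum>v\<in>B. f u + g v) / real (card B)) = (\<Sum>u\<in>B. f u) + (\<Sum>v\<in>B. g v)"
proof -
  have "(\<Sum>v\<in>B. f u + g v) / real (card B) = f u + (\<Sum>v\<in>B. g v) / real (card B)" for u
  proof -
    have c: "real (card B) > 0" using assms by simp
    show ?thesis using c by (simp add: sum.distrib add_divide_distrib)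
  qed
  then show ?thesis using assms by (simp add: sum.distrib)
qed

lemma poincare_block:
  assumes b: "b > 0" and ne: "Blk p b k \<noteq> {}"
  shows "(\<Sum>u\<in>Blk p b k. (x u - (\<Sum>w\<in>Blk p b k. x w) / real (card (Blk p b k)))^2)
         \<le> 2 * real b ^ 2 * (\<Sum>u\<in>Blk p b k. dv p x u + dh p x u)"
proof -
  define B where "B = Blk p b k"
  define m where "m = real (card B)"
  define a where "a = (\<Sum>w\<in>B. x w) / m"
  define Col where "Col j = (\<Sum>u'\<in>{u'\<in>B. snd u' = j}. dv p x u')" for j
  define Row where "Row i = (\<Sum>u'\<in>{u'\<in>B. fst u' = i}. dh p x u')" for i
  have fin: "finite B" unfolding B_def by simp
  have m0: "m > 0" unfolding m_def B_def using ne by (simp add: card_gt_0_iff)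
  have s1: "(x u - a)^2 \<le> (\<Sum>v\<in>B. (x u - x v)^2) / m" for u
  proof -
    have "x u - a = (\<Sum>v\<in>B. 1 * (x u - x v)) / m"
      unfolding a_def using m0 by (simp add: sum_subtractf m_def field_simps)
    then have "(x u - a)^2 = (\<Sum>v\<in>B. 1 * (x u - x v))^2 / m^2"
      by (simp add: power_divide)
    also have "\<dots> \<le> ((\<Sum>v\<in>B. 1^2) * (\<Sum>v\<in>B. (x u - x v)^2)) / m^2"
      by (intro divide_right_mono Cauchy_Schwarz_ineq_sum) simp
    also have "\<dots> = (\<Sum>v\<in>B. (x u - x v)^2) / m"
      using m0 by (simp add: m_def power2_eq_square)
    finally show ?thesis .
  qed
  have s2: "(x u - x v)^2 \<le> 2 * real b * Col (snd u) + 2 * real b * Row (fst v)"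
    if u: "u \<in> B" and v: "v \<in> B" for u v
  proof -
    obtain i1 j1 where u': "u = (i1, j1)" by (cases u)
    obtain i2 j2 where v': "v = (i2, j2)" by (cases v)
    have w: "(i2, j1) \<in> B" using u v unfolding u' v' B_def Blk_def bid_def grid_V_def by auto
    have c: "(x (i1, j1) - x (i2, j1))^2 \<le> real b * Col j1"
      unfolding Col_def B_def by (rule col_bound[OF b]) (use u w in \<open>auto simp: u' B_def\<close>)
    have r: "(x (i2, j1) - x (i2, j2))^2 \<le> real b * Row i2"
      unfolding Row_def B_def by (rule row_bound[OF b]) (use v w in \<open>auto simp: v' B_def\<close>)
    have "(x u - x v)^2 \<le> 2 * (x (i1, j1) - x (i2, j1))^2 + 2 * (x (i2, j1) - x (i2, j2))^2"
      unfolding u' v' by (rule sq_tri)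
    then show ?thesis using c r unfolding u' v' by simp
  qed
  have "(\<Sum>u\<in>B. (x u - a)^2) \<le> (\<Sum>u\<in>B. (\<Sum>v\<in>B. (x u - x v)^2) / m)"
    by (rule sum_mono) (rule s1)
  also have "\<dots> \<le> (\<Sum>u\<in>B. (\<Sum>v\<in>B. 2 * real b * Col (snd u) + 2 * real b * Row (fst v)) / m)"
    by (intro sum_mono divide_right_mono) (use s2 m0 in auto)
  also have "\<dots> = (\<Sum>u\<in>B. 2 * real b * Col (snd u)) + (\<Sum>v\<in>B. 2 * real b * Row (fst v))"
    using m0 fin unfolding m_def by (intro avg_double) auto
  also have "\<dots> \<le> 2 * real b * (real b * (\<Sum>u\<in>B. dv p x u)) + 2 * real b * (real b * (\<Sum>u\<in>B. dh p x u))"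
  proof -
    have "(\<Sum>u\<in>B. Col (snd u)) \<le> real b * (\<Sum>u\<in>B. dv p x u)"
      unfolding Col_def by (rule count_sum[OF fin]) (use Blk_col_card[OF b] dv_nonneg in \<open>auto simp: B_def\<close>)
    moreover have "(\<Sum>u\<in>B. Row (fst u)) \<le> real b * (\<Sum>u\<in>B. dh p x u)"
      unfolding Row_def by (rule count_sum[OF fin]) (use Blk_row_card[OF b] dh_nonneg in \<open>auto simp: B_def\<close>)
    ultimately show ?thesis
      by (simp add: sum_distrib_left[symmetric] mult_left_mono add_mono)
  qed
  finally show ?thesis
    by (simp add: B_def[symmetric] m_def[symmetric] a_def[symmetric] sum.distrib power2_eq_square algebra_simps)
qed


definition avg :: "nat \<Rightarrow> nat \<Rightarrow> (vtx \<Rightarrow> real) \<Rightarrow> vtx \<Rightarrow> real" where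
  "avg p b x v = (\<Sum>w\<in>Blk p b (bid b v). x w) / real (card (Blk p b (bid b v)))"

lemma sum_blocks:
  "(\<Sum>v\<in>grid_V p. h v) = (\<Sum>k\<in>bid b ` grid_V p. \<Sum>v\<in>Blk p b k. h v)"
  unfolding Blk_def by (rule sum.group[symmetric]) auto

lemma sum_blocks_le:
  fixes f g :: "vtx \<Rightarrow> real"
  assumes "\<And>k. k \<in> bid b ` grid_V p \<Longrightarrow> (\<Sum>v\<in>Blk p b k. f v) \<le> (\<Sum>v\<in>Blk p b k. g v)"
  shows "(\<Sum>v\<in>grid_V p. f v) \<le> (\<Sum>v\<in>grid_V p. g v)"
  unfolding sum_blocks[of _ _ b] by (rule sum_mono) (rule assms)

lemma sum_blocks_eq:
  fixes f g :: "vtx \<Rightarrow> real"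
  assumes "\<And>k. k \<in> bid b ` grid_V p \<Longrightarrow> (\<Sum>v\<in>Blk p b k. f v) = (\<Sum>v\<in>Blk p b k. g v)"
  shows "(\<Sum>v\<in>grid_V p. f v) = (\<Sum>v\<in>grid_V p. g v)"
  unfolding sum_blocks[of _ _ b] by (rule sum.cong) (auto intro: assms)

lemma Blk_ne: "k \<in> bid b ` grid_V p \<Longrightarrow> Blk p b k \<noteq> {}"
  unfolding Blk_def by auto

lemma avg_Blk: "v \<in> Blk p b k \<Longrightarrow> avg p b x v = (\<Sum>w\<in>Blk p b k. x w) / real (card (Blk p b k))"
  unfolding avg_def Blk_def by auto

lemma avg_Blk_sum: "(\<Sum>v\<in>Blk p b k. F (avg p b x v) v) = (\<Sum>v\<in>Blk p b k. F ((\<Sum>w\<in>Blk p b k. x w) / real (card (Blk p b k))) v)"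
  by (rule sum.cong) (auto simp: avg_Blk)

lemma global_poincare:
  assumes b: "b > 0"
  shows "(\<Sum>v\<in>grid_V p. (x v - avg p b x v)^2) \<le> 2 * real b ^ 2 * (\<Sum>v\<in>grid_V p. dv p x v + dh p x v)"
proof -
  have "(\<Sum>v\<in>grid_V p. (x v - avg p b x v)^2) \<le> (\<Sum>v\<in>grid_V p. 2 * real b ^ 2 * (dv p x v + dh p x v))"
  proof (rule sum_blocks_le[of b])
    fix k assume k: "k \<in> bid b ` grid_V p"
    show "(\<Sum>v\<in>Blk p b k. (x v - avg p b x v)^2) \<le> (\<Sum>v\<in>Blk p b k. 2 * real b ^ 2 * (dv p x v + dh p x v))"
      using poincare_block[OF b Blk_ne[OF k], of x]
      by (simp add: avg_Blk_sum[where F="\<lambda>a v. (x v - a)^2"] sum_distrib_left)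
  qed
  then show ?thesis by (simp add: sum_distrib_left)
qed

lemma global_jensen:
  "(\<Sum>v\<in>grid_V p. (avg p b x v)^2) \<le> (\<Sum>v\<in>grid_V p. (x v)^2)"
proof (rule sum_blocks_le[of b])
  fix k assume k: "k \<in> bid b ` grid_V p"
  define B where "B = Blk p b k"
  have m: "real (card B) > 0" using Blk_ne[OF k] unfolding B_def by (simp add: card_gt_0_iff)
  have "(\<Sum>v\<in>B. (avg p b x v)^2) = real (card B) * ((\<Sum>w\<in>B. 1 * x w) / real (card B))^2"
    unfolding B_def using avg_Blk_sum[where F="\<lambda>a v. a^2"] by simp
  also have "\<dots> = (\<Sum>w\<in>B. 1 * x w)^2 / real (card B)"
    using m by (simp add: power2_eq_square)
  also have "\<dots> \<le> ((\<Sum>w\<in>B. 1^2) * (\<Sum>w\<in>B. (x w)^2)) / real (card B)"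
    by (intro divide_right_mono Cauchy_Schwarz_ineq_sum) simp
  also have "\<dots> = (\<Sum>w\<in>B. (x w)^2)" using m by simp
  finally show "(\<Sum>v\<in>Blk p b k. (avg p b x v)^2) \<le> (\<Sum>v\<in>Blk p b k. (x v)^2)"
    unfolding B_def .
qed

lemma global_sym:
  "(\<Sum>v\<in>grid_V p. avg p b x v * z v) = (\<Sum>v\<in>grid_V p. avg p b x v * avg p b z v)"
proof (rule sum_blocks_eq[of b])
  fix k assume k: "k \<in> bid b ` grid_V p"
  define B where "B = Blk p b k"
  have m: "real (card B) > 0" using Blk_ne[OF k] unfolding B_def by (simp add: card_gt_0_iff)
  have "(\<Sum>v\<in>B. avg p b x v * z v) = (\<Sum>v\<in>B. (\<Sum>w\<in>B. x w) / real (card B) * z v)"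
    unfolding B_def by (rule avg_Blk_sum)
  also have "\<dots> = (\<Sum>w\<in>B. x w) / real (card B) * (\<Sum>w\<in>B. z w)"
    by (simp add: sum_distrib_left)
  also have "\<dots> = (\<Sum>v\<in>B. (\<Sum>w\<in>B. x w) / real (card B) * ((\<Sum>w\<in>B. z w) / real (card B)))"
    using m by simp
  also have "\<dots> = (\<Sum>v\<in>B. avg p b x v * avg p b z v)"
    unfolding B_def by (rule sum.cong) (auto simp: avg_Blk)
  finally show "(\<Sum>v\<in>Blk p b k. avg p b x v * z v) = (\<Sum>v\<in>Blk p b k. avg p b x v * avg p b z v)"
    unfolding B_def .
qed

lemma global_count:
  "(\<Sum>v\<in>grid_V p. 1 / real (card (Blk p b (bid b v)))) = real (card (bid b ` grid_V p))"
proof -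
  define f where "f v = 1 / real (card (Blk p b (bid b v)))" for v
  have "(\<Sum>v\<in>grid_V p. f v) = (\<Sum>k\<in>bid b ` grid_V p. \<Sum>v\<in>Blk p b k. f v)"
    by (rule sum_blocks)
  also have "\<dots> = (\<Sum>k\<in>bid b ` grid_V p. 1)"
  proof (rule sum.cong)
    fix k assume k: "k \<in> bid b ` grid_V p"
    have m: "real (card (Blk p b k)) > 0" using Blk_ne[OF k] by (simp add: card_gt_0_iff)
    have "(\<Sum>v\<in>Blk p b k. f v) = (\<Sum>v\<in>Blk p b k. 1 / real (card (Blk p b k)))"
      unfolding f_def by (rule sum.cong) (auto simp: Blk_def)
    then show "(\<Sum>v\<in>Blk p b k. f v) = 1" using m Blk_ne[OF k] by simp
  qed simp
  also have "\<dots> = real (card (bid b ` grid_V p))" by simp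
  finally show ?thesis unfolding f_def .
qed

lemma card_bid:
  assumes b: "b > 0"
  shows "card (bid b ` grid_V p) \<le> (p div b + 1)^2"
proof -
  have "bid b ` grid_V p \<subseteq> {..<p div b + 1} \<times> {..<p div b + 1}"
    unfolding bid_def grid_V_def by (auto simp: less_Suc_eq_le div_le_mono)
  then have "card (bid b ` grid_V p) \<le> card ({..<p div b + 1} \<times> {..<p div b + 1})"
    by (intro card_mono) auto
  then show ?thesis by (simp add: card_cartesian_product power2_eq_square)
qed


lemma vinner_CS: "(vinner p x z)^2 \<le> vinner p x x * vinner p z z"
  unfolding vinner_def using Cauchy_Schwarz_ineq_sum[of x z "grid_V p"] by (simp add: power2_eq_square)

lemma vinner_self_nonneg: "vinner p x x \<ge> 0"
  unfolding vinner_def by (simp add: sum_nonneg)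

lemma vnorm_le1: "vnorm p x \<le> 1 \<Longrightarrow> vinner p x x \<le> 1"
  unfolding vnorm_def using vinner_self_nonneg[of p x] by simp

lemma sq_sum_le: "((a::real) + c)^2 \<le> 2 * a^2 + 2 * c^2"
  using sq_tri[of a "-c" 0] by simp

lemma H0_det:
  assumes b: "b > 0" and xn: "vnorm p x \<le> 1" and xq: "quadL p x \<le> \<rho>"
  shows "(vinner p x z)^2 \<le> 2 * (\<Sum>v\<in>grid_V p. (avg p b z v)^2) + 8 * real b ^ 2 * \<rho> * (\<Sum>v\<in>grid_V p. (z v)^2)"
proof -
  let ?V = "grid_V p"
  define A where "A = (\<Sum>v\<in>?V. avg p b x v * z v)"
  define C where "C = (\<Sum>v\<in>?V. (x v - avg p b x v) * z v)"
  have split: "vinner p x z = A + C"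
    unfolding vinner_def A_def C_def by (simp add: sum.distrib[symmetric] algebra_simps)
  have x1: "(\<Sum>v\<in>?V. (x v)^2) \<le> 1" using vnorm_le1[OF xn] unfolding vinner_def by (simp add: power2_eq_square)
  have A2: "A^2 \<le> (\<Sum>v\<in>?V. (avg p b z v)^2)"
  proof -
    have "A = (\<Sum>v\<in>?V. avg p b x v * avg p b z v)" unfolding A_def by (rule global_sym)
    then have "A^2 = (\<Sum>v\<in>?V. avg p b x v * avg p b z v)^2" by simp
    also have "\<dots> \<le> (\<Sum>v\<in>?V. (avg p b x v)^2) * (\<Sum>v\<in>?V. (avg p b z v)^2)"
      by (rule Cauchy_Schwarz_ineq_sum)
    also have "\<dots> \<le> 1 * (\<Sum>v\<in>?V. (avg p b z v)^2)"
      using global_jensen[of p b x] x1 by (intro mult_right_mono) (auto simp: sum_nonneg)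
    finally show ?thesis by simp
  qed
  have C2: "C^2 \<le> 4 * real b ^ 2 * \<rho> * (\<Sum>v\<in>?V. (z v)^2)"
  proof -
    have "C^2 \<le> (\<Sum>v\<in>?V. (x v - avg p b x v)^2) * (\<Sum>v\<in>?V. (z v)^2)"
      unfolding C_def by (rule Cauchy_Schwarz_ineq_sum)
    also have "\<dots> \<le> (2 * real b ^ 2 * (2 * \<rho>)) * (\<Sum>v\<in>?V. (z v)^2)"
    proof (rule mult_right_mono)
      have "(\<Sum>v\<in>?V. (x v - avg p b x v)^2) \<le> 2 * real b ^ 2 * (\<Sum>v\<in>?V. dv p x v + dh p x v)"
        by (rule global_poincare[OF b])
      also have "\<dots> \<le> 2 * real b ^ 2 * (2 * \<rho>)"
        using sum_dvdh_le[of p x] xq by (intro mult_left_mono) auto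
      finally show "(\<Sum>v\<in>?V. (x v - avg p b x v)^2) \<le> 2 * real b ^ 2 * (2 * \<rho>)" .
    qed (simp add: sum_nonneg)
    finally show ?thesis by simp
  qed
  show ?thesis using sq_sum_le[of A C] A2 C2 split by simp
qed


lemma mom_int:
  assumes s: "\<sigma> > 0"
  shows "integrable (density lborel (normal_density \<mu> \<sigma>)) (\<lambda>t. (t - \<mu>)^k)"
  using integrable_normal_moment[of \<sigma> \<mu> k] s
  by (subst integrable_density) auto

lemma mom_val:
  assumes s: "\<sigma> > 0"
  shows "integral\<^sup>L (density lborel (normal_density \<mu> \<sigma>)) (\<lambda>t. (t - \<mu>)^k)
     = integral\<^sup>L lborel (\<lambda>t. normal_density \<mu> \<sigma> t * (t - \<mu>)^k)"
  by (subst integral_density) auto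

lemma mom0: "\<sigma> > 0 \<Longrightarrow> integral\<^sup>L (density lborel (normal_density \<mu> \<sigma>)) (\<lambda>t. (t - \<mu>)^0) = 1"
  by (subst mom_val) auto

lemma mom1: "\<sigma> > 0 \<Longrightarrow> integral\<^sup>L (density lborel (normal_density \<mu> \<sigma>)) (\<lambda>t. (t - \<mu>)^1) = 0"
  by (subst mom_val) (auto intro: integral_normal_moment_odd[where k=0, simplified])

lemma mom2: "\<sigma> > 0 \<Longrightarrow> integral\<^sup>L (density lborel (normal_density \<mu> \<sigma>)) (\<lambda>t. (t - \<mu>)^2) = \<sigma>^2"
  using integral_normal_moment_even[of \<sigma> \<mu> 1]
  by (subst mom_val) (auto simp: power2_eq_square)

lemma prob_law: "\<sigma> > 0 \<Longrightarrow> prob_space (law_y p \<sigma> \<beta>)"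
  unfolding law_y_def by (intro prob_space_PiM prob_space_normal_density)


lemma cross_moment:
  assumes s: "\<sigma> > 0" and u: "u \<in> grid_V p" and v: "v \<in> grid_V p"
  shows "integrable (law_y p \<sigma> \<beta>) (\<lambda>y. (y u - \<beta> u) * (y v - \<beta> v))"
    and "integral\<^sup>L (law_y p \<sigma> \<beta>) (\<lambda>y. (y u - \<beta> u) * (y v - \<beta> v)) = (if u = v then \<sigma>^2 else 0)"
proof -
  define N where "N w = density lborel (normal_density (\<beta> w) \<sigma>)" for w
  interpret product_sigma_finite N
    unfolding product_sigma_finite_def N_def using s
    by (auto intro!: prob_space_imp_sigma_finite prob_space_normal_density)
  define kk where "kk w = (if w = u then 1 else 0) + (if w = v then 1 else (0::nat))" for w
  define f where "f w t = (t - \<beta> w) ^ kk w" for w t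
  have L: "law_y p \<sigma> \<beta> = PiM (grid_V p) N" unfolding law_y_def N_def ..
  have fi: "integrable (N w) (f w)" for w
    unfolding N_def f_def by (rule mom_int[OF s])
  have prod_eq: "(\<Prod>w\<in>grid_V p. f w (y w)) = (y u - \<beta> u) * (y v - \<beta> v)" for y
  proof -
    have "(\<Prod>w\<in>grid_V p. f w (y w)) = (\<Prod>w\<in>grid_V p. (if w = u then y w - \<beta> w else 1) * (if w = v then y w - \<beta> w else 1))"
      unfolding f_def kk_def by (rule prod.cong) (auto simp: power_add)
    also have "\<dots> = (y u - \<beta> u) * (y v - \<beta> v)"
      using u v by (simp add: prod.distrib)
    finally show ?thesis .
  qed
  have "integrable (PiM (grid_V p) N) (\<lambda>y. \<Prod>w\<in>grid_V p. f w (y w))"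
    by (rule product_integrable_prod) (auto intro: fi)
  then show "integrable (law_y p \<sigma> \<beta>) (\<lambda>y. (y u - \<beta> u) * (y v - \<beta> v))"
    unfolding L prod_eq .
  have "integral\<^sup>L (PiM (grid_V p) N) (\<lambda>y. \<Prod>w\<in>grid_V p. f w (y w)) = (\<Prod>w\<in>grid_V p. integral\<^sup>L (N w) (f w))"
    by (rule product_integral_prod) (auto intro: fi)
  also have "\<dots> = (if u = v then \<sigma>^2 else 0)"
  proof (cases "u = v")
    case True
    have "(\<Prod>w\<in>grid_V p. integral\<^sup>L (N w) (f w)) = (\<Prod>w\<in>grid_V p. if w = u then \<sigma>^2 else 1)"
    proof (rule prod.cong)
      fix w assume "w \<in> grid_V p"
      show "integral\<^sup>L (N w) (f w) = (if w = u then \<sigma>^2 else 1)"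
        using mom2[OF s, of "\<beta> w"] mom0[OF s, of "\<beta> w"]
        unfolding N_def f_def kk_def using True by (auto simp: numeral_2_eq_2)
    qed simp
    then show ?thesis using True u by simp
  next
    case False
    have "integral\<^sup>L (N u) (f u) = 0"
      using mom1[OF s, of "\<beta> u"] False unfolding N_def f_def kk_def by simp
    then show ?thesis using False u by (auto intro: prod_zero)
  qed
  finally show "integral\<^sup>L (law_y p \<sigma> \<beta>) (\<lambda>y. (y u - \<beta> u) * (y v - \<beta> v)) = (if u = v then \<sigma>^2 else 0)"
    unfolding L prod_eq .
qed

lemma lin_moment:
  assumes s: "\<sigma> > 0"
  shows "integrable (law_y p \<sigma> \<beta>) (\<lambda>y. (\<Sum>v\<in>grid_V p. a v * (y v - \<beta> v))^2)"
    and "integral\<^sup>L (law_y p \<sigma> \<beta>) (\<lambda>y. (\<Sum>v\<in>grid_V p. a v * (y v - \<beta> v))^2) = \<sigma>^2 * (\<Sum>v\<in>grid_V p. (a v)^2)"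
proof -
  have eq: "(\<Sum>v\<in>grid_V p. a v * (y v - \<beta> v))^2 = (\<Sum>u\<in>grid_V p. \<Sum>v\<in>grid_V p. (a u * a v) * ((y u - \<beta> u) * (y v - \<beta> v)))" for y
    by (simp add: power2_eq_square sum_product algebra_simps)
  show "integrable (law_y p \<sigma> \<beta>) (\<lambda>y. (\<Sum>v\<in>grid_V p. a v * (y v - \<beta> v))^2)"
    unfolding eq by (auto intro!: integrable_sum integrable_mult_right cross_moment(1)[OF s])
  let ?M = "law_y p \<sigma> \<beta>"
  have int_uv: "integrable ?M (\<lambda>y. a u * a v * ((y u - \<beta> u) * (y v - \<beta> v)))"
    if "u \<in> grid_V p" "v \<in> grid_V p" for u v
    using cross_moment(1)[OF s that] by (rule integrable_mult_right)
  have int_u: "integrable ?M (\<lambda>y. \<Sum>v\<in>grid_V p. a u * a v * ((y u - \<beta> u) * (y v - \<beta> v)))"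
    if "u \<in> grid_V p" for u
    using int_uv that by (auto intro!: integrable_sum)
  have "integral\<^sup>L ?M (\<lambda>y. (\<Sum>v\<in>grid_V p. a v * (y v - \<beta> v))^2)
     = (\<Sum>u\<in>grid_V p. integral\<^sup>L ?M (\<lambda>y. \<Sum>v\<in>grid_V p. a u * a v * ((y u - \<beta> u) * (y v - \<beta> v))))"
    unfolding eq by (rule Bochner_Integration.integral_sum) (rule int_u)
  also have "\<dots> = (\<Sum>u\<in>grid_V p. \<Sum>v\<in>grid_V p. (a u * a v) * (if u = v then \<sigma>^2 else 0))"
  proof (rule sum.cong)
    fix u assume u: "u \<in> grid_V p"
    have "integral\<^sup>L ?M (\<lambda>y. \<Sum>v\<in>grid_V p. a u * a v * ((y u - \<beta> u) * (y v - \<beta> v)))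
        = (\<Sum>v\<in>grid_V p. integral\<^sup>L ?M (\<lambda>y. a u * a v * ((y u - \<beta> u) * (y v - \<beta> v))))"
      by (rule Bochner_Integration.integral_sum) (use int_uv u in auto)
    also have "\<dots> = (\<Sum>v\<in>grid_V p. (a u * a v) * (if u = v then \<sigma>^2 else 0))"
      by (rule sum.cong) (use cross_moment(2)[OF s u] in auto)
    finally show "integral\<^sup>L ?M (\<lambda>y. \<Sum>v\<in>grid_V p. a u * a v * ((y u - \<beta> u) * (y v - \<beta> v)))
        = (\<Sum>v\<in>grid_V p. (a u * a v) * (if u = v then \<sigma>^2 else 0))" .
  qed simp
  also have "\<dots> = \<sigma>^2 * (\<Sum>v\<in>grid_V p. (a v)^2)"
    by (simp add: sum_distrib_left power2_eq_square if_distrib cong: if_cong) (simp add: algebra_simps)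
  finally show "integral\<^sup>L (law_y p \<sigma> \<beta>) (\<lambda>y. (\<Sum>v\<in>grid_V p. a v * (y v - \<beta> v))^2) = \<sigma>^2 * (\<Sum>v\<in>grid_V p. (a v)^2)" .
qed


definition Kset :: "nat \<Rightarrow> real \<Rightarrow> (vtx \<Rightarrow> real) set" where
  "Kset p \<rho> = {x. quadL p x \<le> \<rho> \<and> vnorm p x \<le> 1 \<and> (\<Sum>v\<in>grid_V p. x v) = 0}"

lemma ss_def2: "spectral_scan p \<rho> y = Sup ((\<lambda>x. (vinner p x (centre p y))^2) ` Kset p \<rho>)"
  unfolding spectral_scan_def Kset_def by (rule arg_cong[where f=Sup]) auto

lemma zero_in_K: "\<rho> \<ge> 0 \<Longrightarrow> (\<lambda>_. 0) \<in> Kset p \<rho>"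
  unfolding Kset_def quadL_def vnorm_def vinner_def by simp

lemma K_bdd: "x \<in> Kset p \<rho> \<Longrightarrow> (vinner p x z)^2 \<le> vinner p z z"
proof -
  assume x: "x \<in> Kset p \<rho>"
  have "vinner p x x \<le> 1" using x vnorm_le1 unfolding Kset_def by auto
  then have "vinner p x x * vinner p z z \<le> 1 * vinner p z z"
    by (intro mult_right_mono vinner_self_nonneg)
  then show ?thesis using vinner_CS[of p x z] by simp
qed

lemma ss_bdd: "bdd_above ((\<lambda>x. (vinner p x (centre p y))^2) ` Kset p \<rho>)"
  using K_bdd by (auto intro!: bdd_aboveI2)

lemma ss_upper: "x \<in> Kset p \<rho> \<Longrightarrow> (vinner p x (centre p y))^2 \<le> spectral_scan p \<rho> y"
  unfolding ss_def2 by (rule cSup_upper) (use ss_bdd in auto)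

lemma ss_le: "\<rho> \<ge> 0 \<Longrightarrow> (\<And>x. x \<in> Kset p \<rho> \<Longrightarrow> (vinner p x (centre p y))^2 \<le> B) \<Longrightarrow> spectral_scan p \<rho> y \<le> B"
  unfolding ss_def2 by (rule cSup_least) (use zero_in_K[of \<rho> p] in auto)

lemma ss_gt: "\<rho> \<ge> 0 \<Longrightarrow> spectral_scan p \<rho> y > t \<longleftrightarrow> (\<exists>x\<in>Kset p \<rho>. (vinner p x (centre p y))^2 > t)"
  unfolding ss_def2 by (subst less_cSup_iff) (use zero_in_K[of \<rho> p] ss_bdd in auto)

lemma vinner_centre: "(\<Sum>v\<in>grid_V p. x v) = 0 \<Longrightarrow> vinner p x (centre p y) = vinner p x y"
  unfolding vinner_def centre_def by (simp add: right_diff_distrib sum_subtractf sum_distrib_right[symmetric])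

lemma vinner_diff: "vinner p x z = vinner p x q + vinner p x (\<lambda>v. z v - q v)"
  unfolding vinner_def by (simp add: sum.distrib[symmetric] algebra_simps)

lemma avg_lin:
  "avg p b z v = (\<Sum>w\<in>grid_V p. (if w \<in> Blk p b (bid b v) then 1 / real (card (Blk p b (bid b v))) else 0) * z w)"
proof -
  have sub: "Blk p b (bid b v) \<subseteq> grid_V p" unfolding Blk_def by auto
  have "(\<Sum>w\<in>grid_V p. (if w \<in> Blk p b (bid b v) then 1 / real (card (Blk p b (bid b v))) else 0) * z w)
      = (\<Sum>w\<in>grid_V p. if w \<in> Blk p b (bid b v) then z w / real (card (Blk p b (bid b v))) else 0)"
    by (rule sum.cong) auto
  also have "\<dots> = (\<Sum>w\<in>grid_V p \<inter> Blk p b (bid b v). z w / real (card (Blk p b (bid b v))))"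
    by (simp add: sum.inter_restrict)
  also have "\<dots> = avg p b z v"
    using sub unfolding avg_def by (simp add: Int_absorb1 sum_divide_distrib)
  finally show ?thesis ..
qed

lemma avg_coef_sq:
  "(\<Sum>w\<in>grid_V p. (if w \<in> Blk p b (bid b v) then 1 / real (card (Blk p b (bid b v))) else 0)^2)
    = 1 / real (card (Blk p b (bid b v)))"
proof -
  have sub: "Blk p b (bid b v) \<subseteq> grid_V p" unfolding Blk_def by auto
  have "(\<Sum>w\<in>grid_V p. (if w \<in> Blk p b (bid b v) then 1 / real (card (Blk p b (bid b v))) else 0)^2)
      = (\<Sum>w\<in>grid_V p. if w \<in> Blk p b (bid b v) then (1 / real (card (Blk p b (bid b v))))^2 else 0)"
    by (rule sum.cong) auto
  also have "\<dots> = real (card (Blk p b (bid b v))) * (1 / real (card (Blk p b (bid b v))))^2"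
    using sub by (simp add: sum.inter_restrict[symmetric] Int_absorb1)
  also have "\<dots> = 1 / real (card (Blk p b (bid b v)))"
    by (simp add: power2_eq_square)
  finally show ?thesis .
qed


lemma sets_law: "sets (law_y p \<sigma> \<beta>) = sets (PiM (grid_V p) (\<lambda>v. borel :: real measure))"
  unfolding law_y_def by (rule sets_PiM_cong) auto

lemma meas_lin:
  "(\<lambda>y. \<Sum>v\<in>grid_V p. a v * (y v - c v)) \<in> borel_measurable (law_y p \<sigma> \<beta>)"
  unfolding measurable_cong_sets[OF sets_law refl] by measurable

lemma meas_D:
  "(\<lambda>y. \<Sum>v\<in>grid_V p. (centre p y v - q v)^2) \<in> borel_measurable (law_y p \<sigma> \<beta>)"
  unfolding measurable_cong_sets[OF sets_law refl] centre_def vmean_def by measurable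


lemma approx_rat:
  fixes z :: "vtx \<Rightarrow> real"
  assumes r: "r > 0"
  shows "\<exists>q\<in>PiE (grid_V p) (\<lambda>_. \<rat>). (\<Sum>v\<in>grid_V p. (z v - q v)^2) < r^2"
proof -
  define n where "n = real (card (grid_V p))"
  define \<delta> where "\<delta> = r / (n + 1)"
  have n0: "n \<ge> 0" unfolding n_def by simp
  have d0: "\<delta> > 0" unfolding \<delta>_def using r n0 by simp
  have "\<forall>v. \<exists>g\<in>\<rat>. z v - \<delta> < g \<and> g < z v + \<delta>"
    using d0 by (auto intro: Rats_dense_in_real)
  then obtain g where g: "\<And>v. g v \<in> \<rat>" "\<And>v. z v - \<delta> < g v" "\<And>v. g v < z v + \<delta>"
    by metis
  define q where "q = restrict g (grid_V p)"
  have qQ: "q \<in> PiE (grid_V p) (\<lambda>_. \<rat>)" unfolding q_def using g(1) by auto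
  have trm: "(z v - q v)^2 \<le> \<delta>^2" if "v \<in> grid_V p" for v
  proof -
    have "\<bar>z v - q v\<bar> \<le> \<delta>" using g(2)[of v] g(3)[of v] that unfolding q_def by auto
    then show ?thesis by (metis abs_le_square_iff abs_of_pos d0)
  qed
  have "(\<Sum>v\<in>grid_V p. (z v - q v)^2) \<le> n * \<delta>^2"
    unfolding n_def using sum_bounded_above[of "grid_V p" "\<lambda>v. (z v - q v)^2" "\<delta>^2"] trm by simp
  also have "\<dots> < (n + 1) * \<delta>^2" using d0 by simp
  also have "\<dots> \<le> (n + 1)^2 * \<delta>^2"
    using n0 d0 by (intro mult_right_mono) (auto simp: power2_eq_square)
  also have "\<dots> = r^2" unfolding \<delta>_def using n0 by (simp add: power_divide)
  finally show ?thesis using qQ by blast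
qed

lemma abs_vinner_diff:
  assumes x: "x \<in> Kset p \<rho>" and D: "(\<Sum>v\<in>grid_V p. (z v - q v)^2) < r^2" and r: "r > 0"
  shows "\<bar>vinner p x z - vinner p x q\<bar> < r"
proof -
  have "(vinner p x (\<lambda>v. z v - q v))^2 \<le> vinner p (\<lambda>v. z v - q v) (\<lambda>v. z v - q v)"
    by (rule K_bdd[OF x])
  also have "\<dots> < r^2" using D unfolding vinner_def by (simp add: power2_eq_square)
  finally have "\<bar>vinner p x (\<lambda>v. z v - q v)\<bar> < r"
    using r by (metis abs_of_pos power2_abs power_less_imp_less_base abs_ge_zero)
  then show ?thesis using vinner_diff[of p x z q] by simp
qed

definition QI :: "nat \<Rightarrow> ((vtx \<Rightarrow> real) \<times> real) set" where
  "QI p = PiE (grid_V p) (\<lambda>_. \<rat>) \<times> {r\<in>\<rat>. r > 0}"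

lemma countable_QI: "countable (QI p)"
  unfolding QI_def
  by (intro countable_SIGMA countable_PiE countable_rat countable_subset[OF _ countable_rat]) auto

lemma exists_equiv:
  "(\<exists>x\<in>Kset p \<rho>. \<bar>vinner p x z\<bar> > t) \<longleftrightarrow>
   (\<exists>qr\<in>QI p. (\<exists>x\<in>Kset p \<rho>. \<bar>vinner p x (fst qr)\<bar> > t + snd qr) \<and>
               (\<Sum>v\<in>grid_V p. (z v - fst qr v)^2) < (snd qr)^2)"
proof
  assume "\<exists>x\<in>Kset p \<rho>. \<bar>vinner p x z\<bar> > t"
  then obtain x where x: "x \<in> Kset p \<rho>" "\<bar>vinner p x z\<bar> > t" by blast
  obtain r where r: "r \<in> \<rat>" "0 < r" "r < (\<bar>vinner p x z\<bar> - t) / 2"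
    using x(2) Rats_dense_in_real[of 0 "(\<bar>vinner p x z\<bar> - t) / 2"] by auto
  obtain q where q: "q \<in> PiE (grid_V p) (\<lambda>_. \<rat>)" "(\<Sum>v\<in>grid_V p. (z v - q v)^2) < r^2"
    using approx_rat[OF r(2)] by blast
  have "\<bar>vinner p x z - vinner p x q\<bar> < r" by (rule abs_vinner_diff[OF x(1) q(2) r(2)])
  then have "\<bar>vinner p x q\<bar> > t + r" using r(3) abs_triangle_ineq2[of "vinner p x z" "vinner p x q"] by argo
  then show "\<exists>qr\<in>QI p. (\<exists>x\<in>Kset p \<rho>. \<bar>vinner p x (fst qr)\<bar> > t + snd qr) \<and>
               (\<Sum>v\<in>grid_V p. (z v - fst qr v)^2) < (snd qr)^2"
    using q r x(1) by (intro bexI[of _ "(q, r)"]) (auto simp: QI_def)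
next
  assume "\<exists>qr\<in>QI p. (\<exists>x\<in>Kset p \<rho>. \<bar>vinner p x (fst qr)\<bar> > t + snd qr) \<and>
               (\<Sum>v\<in>grid_V p. (z v - fst qr v)^2) < (snd qr)^2"
  then obtain q r x where qr: "(q, r) \<in> QI p" and x: "x \<in> Kset p \<rho>" "\<bar>vinner p x q\<bar> > t + r"
    and D: "(\<Sum>v\<in>grid_V p. (z v - q v)^2) < r^2" by auto
  have r: "r > 0" using qr by (auto simp: QI_def)
  have "\<bar>vinner p x z - vinner p x q\<bar> < r" by (rule abs_vinner_diff[OF x(1) D r])
  then have "\<bar>vinner p x z\<bar> > t" using x(2) abs_triangle_ineq2[of "vinner p x q" "vinner p x z"] by (simp add: abs_minus_commute)
  then show "\<exists>x\<in>Kset p \<rho>. \<bar>vinner p x z\<bar> > t" using x by blast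
qed

lemma sq_gt_iff: "\<tau> \<ge> 0 \<Longrightarrow> (a::real)^2 > \<tau> \<longleftrightarrow> \<bar>a\<bar> > sqrt \<tau>"
  by (metis real_sqrt_abs real_sqrt_less_iff real_sqrt_pow2 abs_ge_zero power2_abs real_sqrt_ge_zero)

lemma meas_ss:
  assumes \<rho>: "\<rho> \<ge> 0" and \<tau>: "\<tau> \<ge> 0"
  shows "{y \<in> space (law_y p \<sigma> \<beta>). spectral_scan p \<rho> y > \<tau>} \<in> sets (law_y p \<sigma> \<beta>)"
proof -
  let ?M = "law_y p \<sigma> \<beta>"
  let ?G = "\<lambda>qr. \<exists>x\<in>Kset p \<rho>. \<bar>vinner p x (fst qr)\<bar> > sqrt \<tau> + snd qr"
  have eq: "{y \<in> space ?M. spectral_scan p \<rho> y > \<tau>} =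
    {y \<in> space ?M. \<exists>qr\<in>QI p. ?G qr \<and> (\<Sum>v\<in>grid_V p. (centre p y v - fst qr v)^2) < (snd qr)^2}"
  proof -
    have "spectral_scan p \<rho> y > \<tau> \<longleftrightarrow> (\<exists>qr\<in>QI p. ?G qr \<and> (\<Sum>v\<in>grid_V p. (centre p y v - fst qr v)^2) < (snd qr)^2)" for y
      unfolding ss_gt[OF \<rho>] sq_gt_iff[OF \<tau>] by (rule exists_equiv)
    then show ?thesis by simp
  qed
  have "{y \<in> space ?M. \<exists>qr\<in>QI p. ?G qr \<and> (\<Sum>v\<in>grid_V p. (centre p y v - fst qr v)^2) < (snd qr)^2} \<in> sets ?M"
  proof (rule sets.sets_Collect_countable_Ex'[OF _ countable_QI])
    fix qr assume "qr \<in> QI p"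
    show "{y \<in> space ?M. ?G qr \<and> (\<Sum>v\<in>grid_V p. (centre p y v - fst qr v)^2) < (snd qr)^2} \<in> sets ?M"
    proof (cases "?G qr")
      case True
      have "{y \<in> space ?M. (\<Sum>v\<in>grid_V p. (centre p y v - fst qr v)^2) < (snd qr)^2} \<in> sets ?M"
        using meas_D[of p "fst qr" \<sigma> \<beta>] by measurable
      then show ?thesis using True by simp
    qed simp
  qed
  then show ?thesis unfolding eq .
qed


lemma quadL_cong:
  assumes "\<And>u v. u \<in> grid_V p \<Longrightarrow> v \<in> grid_V p \<Longrightarrow> x u - x v = c * (z u - z v)"
  shows "quadL p x = c^2 * quadL p z"
proof -
  have "(\<Sum>u\<in>grid_V p. \<Sum>v\<in>grid_V p. grid_W p u v * (x u - x v)^2)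
      = (\<Sum>u\<in>grid_V p. \<Sum>v\<in>grid_V p. c^2 * (grid_W p u v * (z u - z v)^2))"
    by (intro sum.cong refl) (simp add: assms power_mult_distrib)
  then show ?thesis unfolding quadL_alt by (simp add: sum_distrib_left)
qed

lemma quadL_ind:
  assumes C: "C \<subseteq> grid_V p"
  shows "quadL p (indicator C) = real (cut_size p C)"
proof -
  let ?V = "grid_V p"
  let ?S = "{(u, v). u \<in> C \<and> v \<in> ?V - C \<and> grid_adj u v}"
  have Ssub: "?S \<subseteq> ?V \<times> ?V" using C by auto
  have "real (cut_size p C) = (\<Sum>uv\<in>?V \<times> ?V. indicator ?S uv)"
  proof -
    have "(\<Sum>uv\<in>?V \<times> ?V. (indicator ?S uv :: real)) = real (card ((?V \<times> ?V) \<inter> ?S))"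
      unfolding indicator_def by (simp add: sum.If_cases Int_def)
    moreover have e: "(?V \<times> ?V) \<inter> ?S = ?S" using Ssub by blast
    ultimately show ?thesis unfolding cut_size_def by simp
  qed
  also have "\<dots> = (\<Sum>u\<in>?V. \<Sum>v\<in>?V. grid_W p u v * (indicator C u * (1 - indicator C v)))"
    unfolding sum.cartesian_product
    by (intro sum.cong refl) (use C in \<open>auto simp: indicator_def grid_W_def split: prod.splits\<close>)
  finally have c1: "real (cut_size p C) = (\<Sum>u\<in>?V. \<Sum>v\<in>?V. grid_W p u v * (indicator C u * (1 - indicator C v)))" .
  have c2: "(\<Sum>u\<in>?V. \<Sum>v\<in>?V. grid_W p u v * (indicator C v * (1 - indicator C u))) = real (cut_size p C)"
    unfolding c1 by (subst sum.swap) (simp add: grid_W_sym)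
  have "quadL p (indicator C) = (\<Sum>u\<in>?V. \<Sum>v\<in>?V. grid_W p u v * (indicator C u * (1 - indicator C v))
          + grid_W p u v * (indicator C v * (1 - indicator C u))) / 2"
    unfolding quadL_alt by (intro arg_cong[where f="\<lambda>t. t / 2"] sum.cong refl) (auto simp: indicator_def)
  also have "\<dots> = real (cut_size p C)"
    using c1 c2 by (simp add: sum.distrib)
  finally show ?thesis .
qed


lemma sum_ind_real:
  assumes "C \<subseteq> grid_V p"
  shows "(\<Sum>v\<in>grid_V p. (indicator C v :: real)) = real (card C)"
proof -
  have "(\<Sum>v\<in>grid_V p. (indicator C v :: real)) = (\<Sum>v\<in>grid_V p \<inter> C. 1)"
    unfolding indicator_def by (simp add: sum.inter_restrict)
  also have "grid_V p \<inter> C = C" using assms by blast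
  finally show ?thesis by simp
qed

lemma sum_centre: "(\<Sum>v\<in>grid_V p. centre p x v) = 0"
proof (cases "card (grid_V p) = 0")
  case True then have "grid_V p = {}" by simp
  then show ?thesis by simp
next
  case False then show ?thesis
    unfolding centre_def vmean_def by (simp add: sum_subtractf)
qed

lemma centre_ind:
  assumes C: "C \<subseteq> grid_V p" and \<beta>: "\<forall>v\<in>grid_V p. \<beta> v = \<mu> + \<delta> * indicator C v"
    and v: "v \<in> grid_V p"
  shows "centre p \<beta> v = \<delta> * (indicator C v - real (card C) / real (card (grid_V p)))"
proof -
  have n: "card (grid_V p) > 0" using v by (auto simp: card_gt_0_iff)
  have "(\<Sum>w\<in>grid_V p. \<beta> w) = (\<Sum>w\<in>grid_V p. \<mu> + \<delta> * indicator C w)"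
    using \<beta> by (intro sum.cong) auto
  also have "\<dots> = real (card (grid_V p)) * \<mu> + \<delta> * real (card C)"
    using C by (simp add: sum.distrib sum_distrib_left[symmetric] sum_ind_real)
  finally have s: "(\<Sum>w\<in>grid_V p. \<beta> w) = real (card (grid_V p)) * \<mu> + \<delta> * real (card C)" .
  have nr: "real (card (grid_V p)) > 0" using n by simp
  show ?thesis
  proof -
    have e: "(real (card (grid_V p)) * \<mu> + \<delta> * real (card C)) / real (card (grid_V p))
        = \<mu> + \<delta> * real (card C) / real (card (grid_V p))"
      using nr v by (auto simp: add_divide_distrib)
    show ?thesis unfolding centre_def vmean_def s e using \<beta> v by (simp add: algebra_simps)
  qed
qed

lemma norm_centre_ind:
  assumes C: "C \<subseteq> grid_V p" "C \<noteq> {}" and \<beta>: "\<forall>v\<in>grid_V p. \<beta> v = \<mu> + \<delta> * indicator C v"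
  shows "vinner p (centre p \<beta>) (centre p \<beta>)
       = \<delta>^2 * real (card C) * (real (card (grid_V p)) - real (card C)) / real (card (grid_V p))"
proof -
  define n where "n = real (card (grid_V p))"
  define k where "k = real (card C)"
  have n: "n > 0" using C unfolding n_def by (auto simp: card_gt_0_iff)
  have i2: "(indicator C v :: real)^2 = indicator C v" for v by (simp add: indicator_def)
  have sk: "(\<Sum>v\<in>grid_V p. (indicator C v :: real)) = k"
    using C(1) unfolding k_def by (rule sum_ind_real)
  have "vinner p (centre p \<beta>) (centre p \<beta>) = (\<Sum>v\<in>grid_V p. (\<delta>^2 * (1 - 2 * (k/n))) * indicator C v + \<delta>^2 * (k/n)^2)"
    unfolding vinner_def
    by (intro sum.cong refl) (simp add: centre_ind[OF C(1) \<beta>] k_def[symmetric] n_def[symmetric] power2_eq_square algebra_simps i2[unfolded power2_eq_square])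
  also have "\<dots> = \<delta>^2 * (1 - 2 * (k/n)) * k + n * (\<delta>^2 * (k/n)^2)"
    by (simp add: sum.distrib sum_distrib_left[symmetric] sk n_def)
  also have "\<dots> = \<delta>^2 * k * (n - k) / n"
    using n by (simp add: field_simps power2_eq_square)
  finally show ?thesis unfolding n_def k_def .
qed


lemma H1_bound:
  assumes s: "\<sigma> > 0" and \<eta>: "\<eta> > 0" and \<beta>: "\<beta> \<in> Theta1 p \<rho> \<eta>"
  shows "measure (law_y p \<sigma> \<beta>) {y \<in> space (law_y p \<sigma> \<beta>). \<not> spectral_scan p \<rho> y > \<eta>^2 / 8}
           \<le> 4 * \<sigma>^2 / \<eta>^2"
proof -
  interpret P: prob_space "law_y p \<sigma> \<beta>" by (rule prob_law[OF s])
  let ?M = "law_y p \<sigma> \<beta>"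
  let ?V = "grid_V p"
  obtain \<mu> \<delta> C where d0: "\<delta> \<noteq> 0" and Cc: "C \<in> cut_class p \<rho>"
    and \<beta>d: "\<forall>v\<in>?V. \<beta> v = \<mu> + \<delta> * indicator C v" and nb: "vnorm p (centre p \<beta>) \<ge> \<eta>"
    using \<beta> unfolding Theta1_def by blast
  have CV: "C \<subseteq> ?V" "C \<noteq> {}" "C \<noteq> ?V"
    and cut: "real (cut_size p C) / (real (card C) * real (card (?V - C))) \<le> \<rho> / real (card ?V)"
    using Cc unfolding cut_class_def by auto
  define cb where "cb = centre p \<beta>"
  define N where "N = vnorm p cb"
  define n where "n = real (card ?V)"
  define k where "k = real (card C)"
  have N0: "N \<ge> \<eta>" "N > 0" using nb \<eta> unfolding N_def cb_def by auto
  have NN: "vinner p cb cb = N^2" unfolding N_def vnorm_def using vinner_self_nonneg[of p cb] by simp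
  define x0 where "x0 v = cb v / N" for v
  have sx: "(\<Sum>v\<in>?V. x0 v) = 0"
    unfolding x0_def cb_def by (simp add: sum_divide_distrib[symmetric] sum_centre)
  have nx: "vinner p x0 x0 = 1"
  proof -
    have "vinner p x0 x0 = vinner p cb cb / N^2"
      unfolding vinner_def x0_def by (simp add: sum_divide_distrib power2_eq_square)
    then show ?thesis using NN N0 by simp
  qed
  have kpos: "k > 0" unfolding k_def using CV by (auto simp: card_gt_0_iff intro: finite_subset)
  have kn: "k < n" unfolding k_def n_def using CV by (auto intro!: psubset_card_mono)
  have cardD: "real (card (?V - C)) = n - k"
    unfolding n_def k_def using CV by (simp add: card_Diff_subset of_nat_diff card_mono finite_subset)
  have cut': "real (cut_size p C) * n \<le> \<rho> * (k * (n - k))"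
  proof -
    have pos: "k * (n - k) > 0" using kpos kn by simp
    have "real (cut_size p C) / (k * (n - k)) \<le> \<rho> / n" using cut cardD unfolding k_def n_def by simp
    moreover have "n > 0" using kpos kn by simp
    ultimately show ?thesis using pos by (simp add: field_simps)
  qed
  have NN2: "N^2 = \<delta>^2 * k * (n - k) / n"
    using NN norm_centre_ind[OF CV(1,2) \<beta>d] unfolding cb_def k_def n_def by simp
  have qx: "quadL p x0 \<le> \<rho>"
  proof -
    have "quadL p x0 = (\<delta> / N)^2 * quadL p (indicator C)"
    proof (rule quadL_cong)
      fix u v assume uv: "u \<in> ?V" "v \<in> ?V"
      note cu = centre_ind[OF CV(1) \<beta>d uv(1)] and cv = centre_ind[OF CV(1) \<beta>d uv(2)]
      show "x0 u - x0 v = \<delta> / N * (indicator C u - indicator C v)"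
        unfolding x0_def cb_def cu cv using N0 by (simp add: field_simps)
    qed
    also have "\<dots> = \<delta>^2 * real (cut_size p C) / N^2"
      using quadL_ind[OF CV(1)] by (simp add: power_divide)
    also have "\<dots> = real (cut_size p C) * n / (k * (n - k))"
      unfolding NN2 using d0 kpos kn by (simp add: field_simps)
    also have "\<dots> \<le> \<rho>"
      using cut' kpos kn by (simp add: divide_le_eq mult.commute)
    finally show ?thesis .
  qed
  have xK: "x0 \<in> Kset p \<rho>"
    unfolding Kset_def vnorm_def using qx nx sx by simp
  have vb: "vinner p x0 \<beta> = N"
  proof -
    have "vinner p x0 \<beta> = vinner p x0 cb" unfolding cb_def by (rule vinner_centre[OF sx, symmetric])
    also have "\<dots> = vinner p cb cb / N" unfolding vinner_def x0_def by (simp add: sum_divide_distrib)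
    finally show ?thesis using NN N0 by (simp add: power2_eq_square)
  qed
  define f where "f y = (\<Sum>v\<in>?V. x0 v * (y v - \<beta> v))" for y
  have vy: "vinner p x0 (centre p y) = N + f y" for y
  proof -
    have "vinner p x0 (centre p y) = vinner p x0 y" by (rule vinner_centre[OF sx])
    also have "\<dots> = vinner p x0 \<beta> + f y" unfolding vinner_def f_def by (simp add: sum.distrib[symmetric] algebra_simps)
    finally show ?thesis using vb by simp
  qed
  have sub: "{y \<in> space ?M. \<not> spectral_scan p \<rho> y > \<eta>^2 / 8} \<subseteq> {y \<in> space ?M. \<bar>f y\<bar> \<ge> \<eta> / 2}"
  proof clarify
    fix y assume y: "y \<in> space ?M" and ns: "\<not> spectral_scan p \<rho> y > \<eta>^2 / 8"
    show "\<bar>f y\<bar> \<ge> \<eta> / 2"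
    proof (rule ccontr)
      assume "\<not> \<bar>f y\<bar> \<ge> \<eta> / 2"
      then have "vinner p x0 (centre p y) > \<eta> / 2" using vy[of y] N0 by linarith
      then have "(vinner p x0 (centre p y))^2 > (\<eta> / 2)^2" using \<eta>
        by (intro power_strict_mono) auto
      moreover have "(vinner p x0 (centre p y))^2 \<le> spectral_scan p \<rho> y" by (rule ss_upper[OF xK])
      moreover have "\<eta>^2 > 0" using \<eta> by simp
      moreover have "(\<eta> / 2)^2 = \<eta>^2 / 4" by (simp add: power_divide)
      ultimately show False using ns by linarith
    qed
  qed
  have fm: "f \<in> borel_measurable ?M" unfolding f_def by (rule meas_lin)
  have fi: "integrable ?M (\<lambda>y. (f y)^2)" unfolding f_def by (rule lin_moment(1)[OF s])
  have fE: "integral\<^sup>L ?M (\<lambda>y. (f y)^2) = \<sigma>^2"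
    unfolding f_def lin_moment(2)[OF s] using nx unfolding vinner_def by (simp add: power2_eq_square)
  have "measure ?M {y \<in> space ?M. \<not> spectral_scan p \<rho> y > \<eta>^2 / 8} \<le> measure ?M {y \<in> space ?M. \<bar>f y\<bar> \<ge> \<eta> / 2}"
    by (rule P.finite_measure_mono[OF sub]) (use fm in measurable)
  also have "\<dots> \<le> integral\<^sup>L ?M (\<lambda>y. (f y)^2) / (\<eta> / 2)^2"
    by (rule P.second_moment_method[OF fm fi]) (use \<eta> in simp)
  also have "\<dots> = 4 * \<sigma>^2 / \<eta>^2" unfolding fE by (simp add: power_divide)
  finally show ?thesis .
qed


lemma H0_bound:
  assumes s: "\<sigma> > 0" and b: "b > 0" and \<rho>: "\<rho> \<ge> 0" and \<tau>: "\<tau> > 0" and \<beta>: "\<beta> \<in> Theta0 p"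
  shows "measure (law_y p \<sigma> \<beta>) {y \<in> space (law_y p \<sigma> \<beta>). spectral_scan p \<rho> y > \<tau>}
     \<le> (2 * \<sigma>^2 * real (card (bid b ` grid_V p)) + 8 * real b ^ 2 * \<rho> * \<sigma>^2 * real (card (grid_V p))) / \<tau>"
proof -
  interpret P: prob_space "law_y p \<sigma> \<beta>" by (rule prob_law[OF s])
  let ?M = "law_y p \<sigma> \<beta>"
  let ?V = "grid_V p"
  obtain \<mu> where \<mu>: "\<forall>v\<in>?V. \<beta> v = \<mu>" using \<beta> unfolding Theta0_def by blast
  define cw where "cw v w = (if w \<in> Blk p b (bid b v) then 1 / real (card (Blk p b (bid b v))) else 0)" for v w
  define dl where "dl v w = (if w = v then 1 else (0::real))" for v w :: vtx
  define S1 where "S1 y = (\<Sum>v\<in>?V. (\<Sum>w\<in>?V. cw v w * (y w - \<beta> w))^2)" for y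
  define S2 where "S2 y = (\<Sum>v\<in>?V. (\<Sum>w\<in>?V. dl v w * (y w - \<beta> w))^2)" for y
  define c2 where "c2 = 8 * real b ^ 2 * \<rho>"
  define A where "A y = 2 * S1 y + c2 * S2 y" for y
  have S2e: "S2 y = (\<Sum>v\<in>?V. (y v - \<beta> v)^2)" for y
  proof -
    have "(\<Sum>w\<in>?V. dl v w * (y w - \<beta> w)) = y v - \<beta> v" if "v \<in> ?V" for v
    proof -
      have "(\<Sum>w\<in>?V. dl v w * (y w - \<beta> w)) = (\<Sum>w\<in>?V. if w = v then y w - \<beta> w else 0)"
        unfolding dl_def by (rule sum.cong) auto
      then show ?thesis using that by simp
    qed
    then show ?thesis unfolding S2_def by (intro sum.cong refl) simp
  qed
  have bound: "spectral_scan p \<rho> y \<le> A y" for y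
  proof (rule ss_le[OF \<rho>])
    fix x assume x: "x \<in> Kset p \<rho>"
    have sx: "(\<Sum>v\<in>?V. x v) = 0" and xn: "vnorm p x \<le> 1" and xq: "quadL p x \<le> \<rho>"
      using x unfolding Kset_def by auto
    define e where "e v = y v - \<beta> v" for v
    have "vinner p x (centre p y) = vinner p x y" by (rule vinner_centre[OF sx])
    also have "\<dots> = vinner p x e + \<mu> * (\<Sum>v\<in>?V. x v)"
      unfolding vinner_def e_def using \<mu> by (simp add: sum_distrib_left sum.distrib[symmetric] algebra_simps)
    finally have ve: "vinner p x (centre p y) = vinner p x e" using sx by simp
    have "(vinner p x e)^2 \<le> 2 * (\<Sum>v\<in>?V. (avg p b e v)^2) + 8 * real b ^ 2 * \<rho> * (\<Sum>v\<in>?V. (e v)^2)"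
      by (rule H0_det[OF b xn xq])
    also have "\<dots> = A y"
      unfolding A_def S1_def S2e c2_def e_def cw_def avg_lin ..
    finally show "(vinner p x (centre p y))^2 \<le> A y" using ve by simp
  qed
  have int1: "integrable ?M (\<lambda>y. (\<Sum>w\<in>?V. a w * (y w - \<beta> w))^2)" for a
    by (rule lin_moment(1)[OF s])
  have iS1: "integrable ?M S1" unfolding S1_def using int1 by (auto intro!: integrable_sum)
  have iS2: "integrable ?M S2" unfolding S2_def using int1 by (auto intro!: integrable_sum)
  have iA: "integrable ?M A" unfolding A_def using iS1 iS2 by auto
  have eS1: "integral\<^sup>L ?M S1 = \<sigma>^2 * real (card (bid b ` ?V))"
  proof -
    have "integral\<^sup>L ?M S1 = (\<Sum>v\<in>?V. integral\<^sup>L ?M (\<lambda>y. (\<Sum>w\<in>?V. cw v w * (y w - \<beta> w))^2))"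
      unfolding S1_def by (rule Bochner_Integration.integral_sum) (rule int1)
    also have "\<dots> = (\<Sum>v\<in>?V. \<sigma>^2 * (1 / real (card (Blk p b (bid b v)))))"
      by (intro sum.cong refl) (simp add: lin_moment(2)[OF s] cw_def avg_coef_sq)
    also have "\<dots> = \<sigma>^2 * real (card (bid b ` ?V))"
      by (subst sum_distrib_left[symmetric]) (simp only: global_count)
    finally show ?thesis .
  qed
  have eS2: "integral\<^sup>L ?M S2 = \<sigma>^2 * real (card ?V)"
  proof -
    have "integral\<^sup>L ?M S2 = (\<Sum>v\<in>?V. integral\<^sup>L ?M (\<lambda>y. (\<Sum>w\<in>?V. dl v w * (y w - \<beta> w))^2))"
      unfolding S2_def by (rule Bochner_Integration.integral_sum) (rule int1)
    also have "\<dots> = (\<Sum>v\<in>?V. \<sigma>^2)"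
    proof (intro sum.cong refl)
      fix v assume v: "v \<in> ?V"
      have "(\<Sum>w\<in>?V. (dl v w)^2) = (\<Sum>w\<in>?V. if w = v then 1 else 0)"
        unfolding dl_def by (rule sum.cong) auto
      then have "(\<Sum>w\<in>?V. (dl v w)^2) = 1" using v by simp
      then show "integral\<^sup>L ?M (\<lambda>y. (\<Sum>w\<in>?V. dl v w * (y w - \<beta> w))^2) = \<sigma>^2"
        by (simp add: lin_moment(2)[OF s])
    qed
    finally show ?thesis by simp
  qed
  have eA: "integral\<^sup>L ?M A = 2 * \<sigma>^2 * real (card (bid b ` ?V)) + 8 * real b ^ 2 * \<rho> * \<sigma>^2 * real (card ?V)"
    unfolding A_def using iS1 iS2 by (simp add: eS1 eS2 c2_def)
  have Anonneg: "A y \<ge> 0" for y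
    unfolding A_def S1_def S2_def c2_def using \<rho> by (intro add_nonneg_nonneg mult_nonneg_nonneg sum_nonneg) auto
  have Am: "A \<in> borel_measurable ?M" using iA by (rule borel_measurable_integrable)
  have sub: "{y \<in> space ?M. spectral_scan p \<rho> y > \<tau>} \<subseteq> {y \<in> space ?M. A y \<ge> \<tau>}"
    using bound by (auto intro: less_imp_le order.strict_trans2)
  have "measure ?M {y \<in> space ?M. spectral_scan p \<rho> y > \<tau>} \<le> measure ?M {y \<in> space ?M. A y \<ge> \<tau>}"
    by (rule P.finite_measure_mono[OF sub]) (use Am in measurable)
  also have "\<dots> \<le> integral\<^sup>L ?M A / \<tau>"
    by (rule integral_Markov_inequality_measure[OF iA _ _ \<tau>, of "space ?M"]) (use Anonneg in auto)
  finally show ?thesis unfolding eA .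
qed


lemma numeric:
  fixes c \<sigma> \<eta> :: real and p :: nat
  assumes p: "p \<ge> 1" and c: "c > 0" and s: "\<sigma> > 0" and \<eta>: "\<eta> > 0"
  defines "S \<equiv> real p powr (1/4)"
  defines "b \<equiv> nat \<lfloor>S\<rfloor>"
  defines "r \<equiv> real (p^2) powr (3/8) / (\<eta> / \<sigma>)"
  shows "b > 0"
    and "(2 * \<sigma>^2 * real (card (bid b ` grid_V p)) + 8 * real b ^ 2 * (c / sqrt (real (p^2))) * \<sigma>^2 * real (card (grid_V p))) / (\<eta>^2 / 8)
         \<le> 8 * (18 + 8 * c) * r^2"
    and "4 * \<sigma>^2 / \<eta>^2 \<le> 4 * r^2"
proof -
  define x where "x = real p"
  have x1: "x \<ge> 1" unfolding x_def using p by simp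
  have S1: "S \<ge> 1" unfolding S_def x_def[symmetric] using x1 by (intro ge_one_powr_ge_zero) auto
  have S4: "S^4 = x" unfolding S_def x_def[symmetric] using x1 by (subst powr_power) auto
  have S3: "S^3 = real (p^2) powr (3/8)"
  proof -
    have "S^3 = x powr (3/4)" unfolding S_def x_def[symmetric] using x1 by (subst powr_power) auto
    also have "x powr (3/4) = (x powr 2) powr (3/8)" by (simp add: powr_powr)
    also have "x powr 2 = real (p^2)" unfolding x_def using x1 x_def by simp
    finally show ?thesis .
  qed
  have fl1: "\<lfloor>S\<rfloor> \<ge> 1" using S1 by simp
  have bS: "real b = real_of_int \<lfloor>S\<rfloor>" unfolding b_def using fl1 by simp
  show b0: "b > 0" unfolding b_def using fl1 by simp
  have bleS: "real b \<le> S" unfolding bS by simp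
  have bgeS: "real b \<ge> S / 2"
  proof -
    have "real_of_int \<lfloor>S\<rfloor> > S - 1" by linarith
    moreover have "real_of_int \<lfloor>S\<rfloor> \<ge> 1" using fl1 by simp
    ultimately show ?thesis unfolding bS by linarith
  qed
  have b1: "real b \<ge> 1" using b0 by simp
  have r2: "r^2 = S^6 * \<sigma>^2 / \<eta>^2"
    unfolding r_def S3[symmetric] using s \<eta> by (simp add: power_divide field_simps power_mult_distrib)
  have nV: "real (card (grid_V p)) = x^2" unfolding x_def by (simp add: card_grid_V)
  have sq: "sqrt (real (p^2)) = x" unfolding x_def by simp
  have Spos: "S > 0" using S1 by simp
  have pdiv: "real (p div b) \<le> 2 * S^3"
  proof -
    have "real (p div b) \<le> x / real b" unfolding x_def by (rule of_nat_div_le_of_nat)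
    also have "\<dots> \<le> x / (S / 2)" using Spos bgeS x1 by (intro divide_left_mono) auto
    also have "\<dots> = 2 * S^3" unfolding S4[symmetric] using Spos by (simp add: field_simps power_def)
    finally show ?thesis .
  qed
  have cnt: "real (card (bid b ` grid_V p)) \<le> 9 * S^6"
  proof -
    have "real (card (bid b ` grid_V p)) \<le> (real (p div b) + 1)^2"
      using card_bid[OF b0, of p] by (metis of_nat_1 of_nat_add of_nat_le_iff of_nat_power)
    also have "\<dots> \<le> (3 * S^3)^2"
    proof (rule power_mono)
      have "1 \<le> S^3" using S1 by simp
      then show "real (p div b) + 1 \<le> 3 * S^3" using pdiv by linarith
    qed simp
    also have "\<dots> = 9 * S^6" by (simp add: power_mult_distrib power_mult[symmetric])
    finally show ?thesis .
  qed
  have t2: "real b ^ 2 * (c / sqrt (real (p^2))) * real (card (grid_V p)) \<le> c * S^6"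
  proof -
    have "real b ^ 2 * (c / sqrt (real (p^2))) * real (card (grid_V p)) = real b ^ 2 * c * x"
      unfolding sq nV using x1 by (simp add: power2_eq_square)
    also have "\<dots> \<le> S^2 * c * x"
      using bleS b1 c x1 by (intro mult_right_mono power_mono) auto
    also have "\<dots> = c * S^6" unfolding S4[symmetric] by (simp add: power_def)
    finally show ?thesis .
  qed
  have num: "2 * \<sigma>^2 * real (card (bid b ` grid_V p)) + 8 * real b ^ 2 * (c / sqrt (real (p^2))) * \<sigma>^2 * real (card (grid_V p))
      \<le> \<sigma>^2 * S^6 * (18 + 8 * c)"
  proof -
    have "2 * \<sigma>^2 * real (card (bid b ` grid_V p)) \<le> 2 * \<sigma>^2 * (9 * S^6)"
      using cnt s by (intro mult_left_mono) auto
    moreover have "8 * real b ^ 2 * (c / sqrt (real (p^2))) * \<sigma>^2 * real (card (grid_V p)) \<le> 8 * \<sigma>^2 * (c * S^6)"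
    proof -
      have e: "8 * real b ^ 2 * (c / sqrt (real (p^2))) * \<sigma>^2 * real (card (grid_V p))
          = 8 * \<sigma>^2 * (real b ^ 2 * (c / sqrt (real (p^2))) * real (card (grid_V p)))" by (simp only: ac_simps)
      show ?thesis unfolding e using t2 s by (intro mult_left_mono) auto
    qed
    ultimately show ?thesis by (simp add: algebra_simps)
  qed
  show "(2 * \<sigma>^2 * real (card (bid b ` grid_V p)) + 8 * real b ^ 2 * (c / sqrt (real (p^2))) * \<sigma>^2 * real (card (grid_V p))) / (\<eta>^2 / 8)
         \<le> 8 * (18 + 8 * c) * r^2"
  proof -
    have "(2 * \<sigma>^2 * real (card (bid b ` grid_V p)) + 8 * real b ^ 2 * (c / sqrt (real (p^2))) * \<sigma>^2 * real (card (grid_V p))) / (\<eta>^2 / 8)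
        \<le> (\<sigma>^2 * S^6 * (18 + 8 * c)) / (\<eta>^2 / 8)"
      using num \<eta> by (intro divide_right_mono) auto
    also have "\<dots> = 8 * (18 + 8 * c) * r^2" unfolding r2 using \<eta> by (simp add: field_simps)
    finally show ?thesis .
  qed
  show "4 * \<sigma>^2 / \<eta>^2 \<le> 4 * r^2"
  proof -
    have "1 \<le> S^6" using S1 by simp
    then have "\<sigma>^2 / \<eta>^2 \<le> S^6 * \<sigma>^2 / \<eta>^2"
      using s \<eta> by (simp add: divide_right_mono mult_le_cancel_right1)
    then show ?thesis unfolding r2 by simp
  qed
qed


theorem corollary3:
  fixes c :: real and \<sigma> \<eta> :: "nat \<Rightarrow> real"
  assumes c_pos: "c > 0"
    and \<sigma>_pos: "\<forall>p. \<sigma> p > 0"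
    and \<eta>_pos: "\<forall>p. \<eta> p > 0"
    and snr: "(\<lambda>p. real (p\<^sup>2) powr (3/8) / (\<eta> p / \<sigma> p)) \<longlonglongrightarrow> 0"
  shows "\<exists>\<tau> :: nat \<Rightarrow> real.
    (\<forall>p \<beta>. {y \<in> space (law_y p (\<sigma> p) \<beta>).
              spectral_scan p (c / sqrt (real (p\<^sup>2))) y > \<tau> p} \<in> sets (law_y p (\<sigma> p) \<beta>)) \<and>
    (\<forall>\<epsilon>>0. eventually (\<lambda>p. \<forall>\<beta>\<in>Theta0 p.
        measure (law_y p (\<sigma> p) \<beta>) {y \<in> space (law_y p (\<sigma> p) \<beta>).
          spectral_scan p (c / sqrt (real (p\<^sup>2))) y > \<tau> p} \<le> \<epsilon>) sequentially) \<and>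
    (\<forall>\<epsilon>>0. eventually (\<lambda>p. \<forall>\<beta>\<in>Theta1 p (c / sqrt (real (p\<^sup>2))) (\<eta> p).
        measure (law_y p (\<sigma> p) \<beta>) {y \<in> space (law_y p (\<sigma> p) \<beta>).
          \<not> spectral_scan p (c / sqrt (real (p\<^sup>2))) y > \<tau> p} \<le> \<epsilon>) sequentially)"
proof -
  define \<tau> where "\<tau> p = (\<eta> p)^2 / 8" for p
  define r where "r p = real (p\<^sup>2) powr (3/8) / (\<eta> p / \<sigma> p)" for p
  define K where "K = 8 * (18 + 8 * c)"
  have K0: "K > 0" unfolding K_def using c_pos by simp
  have \<rho>0: "c / sqrt (real (p\<^sup>2)) \<ge> 0" for p using c_pos by simp
  have \<tau>0: "\<tau> p > 0" for p unfolding \<tau>_def using \<eta>_pos[rule_format, of p] by simp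
  have r2: "(\<lambda>p. (r p)^2) \<longlonglongrightarrow> 0"
    using tendsto_power[OF snr, of 2] unfolding r_def by simp
  have P1: "\<forall>p \<beta>. {y \<in> space (law_y p (\<sigma> p) \<beta>).
              spectral_scan p (c / sqrt (real (p\<^sup>2))) y > \<tau> p} \<in> sets (law_y p (\<sigma> p) \<beta>)"
    using meas_ss[OF \<rho>0 less_imp_le[OF \<tau>0]] by blast
  have P2: "\<forall>\<epsilon>>0. eventually (\<lambda>p. \<forall>\<beta>\<in>Theta0 p.
        measure (law_y p (\<sigma> p) \<beta>) {y \<in> space (law_y p (\<sigma> p) \<beta>).
          spectral_scan p (c / sqrt (real (p\<^sup>2))) y > \<tau> p} \<le> \<epsilon>) sequentially"
  proof (intro allI impI)
    fix \<epsilon> :: real assume e: "\<epsilon> > 0"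
    have ev: "eventually (\<lambda>p. (r p)^2 < \<epsilon> / K \<and> p \<ge> 1) sequentially"
      using order_tendstoD(2)[OF r2, of "\<epsilon> / K"] e K0 eventually_ge_at_top[of 1]
      by (auto intro: eventually_conj)
    show "eventually (\<lambda>p. \<forall>\<beta>\<in>Theta0 p.
        measure (law_y p (\<sigma> p) \<beta>) {y \<in> space (law_y p (\<sigma> p) \<beta>).
          spectral_scan p (c / sqrt (real (p\<^sup>2))) y > \<tau> p} \<le> \<epsilon>) sequentially"
    proof (rule eventually_mono[OF ev], intro ballI)
      fix p \<beta> assume pr: "(r p)^2 < \<epsilon> / K \<and> p \<ge> 1" and \<beta>: "\<beta> \<in> Theta0 p"
      define b where "b = nat \<lfloor>real p powr (1/4)\<rfloor>"
      note num = numeric[of p c "\<sigma> p" "\<eta> p", OF _ c_pos \<sigma>_pos[rule_format] \<eta>_pos[rule_format]]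
      have b0: "b > 0" unfolding b_def using num(1) pr by simp
      have "measure (law_y p (\<sigma> p) \<beta>) {y \<in> space (law_y p (\<sigma> p) \<beta>).
          spectral_scan p (c / sqrt (real (p\<^sup>2))) y > \<tau> p}
        \<le> (2 * (\<sigma> p)^2 * real (card (bid b ` grid_V p)) + 8 * real b ^ 2 * (c / sqrt (real (p\<^sup>2))) * (\<sigma> p)^2 * real (card (grid_V p))) / \<tau> p"
        by (rule H0_bound[OF \<sigma>_pos[rule_format] b0 \<rho>0 \<tau>0 \<beta>])
      also have "\<dots> \<le> K * (r p)^2"
        using num(2) pr unfolding \<tau>_def K_def r_def b_def by simp
      also have "\<dots> \<le> \<epsilon>" using pr K0 by (simp add: field_simps)
      finally show "measure (law_y p (\<sigma> p) \<beta>) {y \<in> space (law_y p (\<sigma> p) \<beta>).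
          spectral_scan p (c / sqrt (real (p\<^sup>2))) y > \<tau> p} \<le> \<epsilon>" .
    qed
  qed
  have P3: "\<forall>\<epsilon>>0. eventually (\<lambda>p. \<forall>\<beta>\<in>Theta1 p (c / sqrt (real (p\<^sup>2))) (\<eta> p).
        measure (law_y p (\<sigma> p) \<beta>) {y \<in> space (law_y p (\<sigma> p) \<beta>).
          \<not> spectral_scan p (c / sqrt (real (p\<^sup>2))) y > \<tau> p} \<le> \<epsilon>) sequentially"
  proof (intro allI impI)
    fix \<epsilon> :: real assume e: "\<epsilon> > 0"
    have ev: "eventually (\<lambda>p. (r p)^2 < \<epsilon> / 4 \<and> p \<ge> 1) sequentially"
      using order_tendstoD(2)[OF r2, of "\<epsilon> / 4"] e eventually_ge_at_top[of 1]
      by (auto intro: eventually_conj)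
    show "eventually (\<lambda>p. \<forall>\<beta>\<in>Theta1 p (c / sqrt (real (p\<^sup>2))) (\<eta> p).
        measure (law_y p (\<sigma> p) \<beta>) {y \<in> space (law_y p (\<sigma> p) \<beta>).
          \<not> spectral_scan p (c / sqrt (real (p\<^sup>2))) y > \<tau> p} \<le> \<epsilon>) sequentially"
    proof (rule eventually_mono[OF ev], intro ballI)
      fix p \<beta> assume pr: "(r p)^2 < \<epsilon> / 4 \<and> p \<ge> 1" and \<beta>: "\<beta> \<in> Theta1 p (c / sqrt (real (p\<^sup>2))) (\<eta> p)"
      note num = numeric[of p c "\<sigma> p" "\<eta> p", OF _ c_pos \<sigma>_pos[rule_format] \<eta>_pos[rule_format]]
      have "measure (law_y p (\<sigma> p) \<beta>) {y \<in> space (law_y p (\<sigma> p) \<beta>).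
          \<not> spectral_scan p (c / sqrt (real (p\<^sup>2))) y > \<tau> p} \<le> 4 * (\<sigma> p)^2 / (\<eta> p)^2"
        unfolding \<tau>_def by (rule H1_bound[OF \<sigma>_pos[rule_format] \<eta>_pos[rule_format] \<beta>])
      also have "\<dots> \<le> 4 * (r p)^2" using num(3) pr unfolding r_def by simp
      also have "\<dots> \<le> \<epsilon>" using pr by simp
      finally show "measure (law_y p (\<sigma> p) \<beta>) {y \<in> space (law_y p (\<sigma> p) \<beta>).
          \<not> spectral_scan p (c / sqrt (real (p\<^sup>2))) y > \<tau> p} \<le> \<epsilon>" .
    qed
  qed
  show ?thesis using P1 P2 P3 by blast
qed

end
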